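(* Let $Z$ be a sufficiently saturated model of the complete theory of $(\mathbb{Z},+,<)$ (possibly expanded), containing $\mathbb{Z}$ as elementary substructure. Let $D$ be a $0$-definable set, $X$ a profinite topological space, and $\{C_d\}_{d\in D}$, $C_d\subseteq Z^r$, a $0$-definable family of bounded sets. Put $C=\bigcup_{d\in D}C_d\times\{d\}$. For each $d\in D$ let $Y_d\subseteq X\times C_d$ be a nonempty semigroup (with some product), and put $Y=\bigcup_d Y_d\times\{d\}\subseteq X\times C$, with the fiberwise product $Y\times_D Y\to Y$. Assume: (1) $Y$ is $0$-relatively definable in $X\times C$; (2) the product $Y\times_D Y\to Y$ is a $0$-pro-definable map. Then for every $d\in D$, $Y_d$ has an idempotent.
   Context: "$0$-definable" means definable without parameters. A set $C_d$ is bounded if $C_d\subseteq[-c,c]^r$ for some $c\in Z$. The profinite space $X$ is viewed as a $0$-pro-definable set as follows: for each finite partition $U$ of $X$ into clopen sets, $X/U$ denotes the finite set $U$ (finite sets are treated as $0$-definable sets, using the two $0$-definable constants $0,1$), and $\pi_U:X\times C\to X/U\times C$ sends $(x,c)$ to $(R,c)$ where $x\in R\in U$. $Y\subseteq X\times C$ is $0$-relatively definable if there are a finite clopen partition $U_0$ and a $0$-definable $F_0\subseteq X/U_0\times C$ with $Y=\pi_{U_0}^{-1}(F_0)$. The product $Y\times_DY\to Y$ (defined on pairs in the same fiber $Y_d$) is a $0$-pro-definable map if for every finite clopen partition $U$ there exist a finite clopen partition $V$ refining $U$ and a $0$-definable map $m_{V,U}:(X/V\times C)\times_D(X/V\times C)\to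 X/U\times C$ with $\pi_U(y\cdot y')=m_{V,U}(\pi_V(y),\pi_V(y'))$ for all $y,y'$ in a common $Y_d$. An idempotent of $Y_d$ is an element $e$ with $e\cdot e=e$. *)

theory Defs
  imports "HOL-Analysis.Analysis"
begin

text \<open>Terms and formulas over an arbitrary language: function symbols of type 'f and
relation symbols of type 'r (each symbol may be applied to argument lists of any length;
this just amounts to an arbitrary, possibly large, language).\<close>

datatype 'f trm = Var nat | Fn 'f "'f trm list"

datatype ('f, 'r) fm =
    Eq "'f trm" "'f trm"
  | Rel 'r "'f trm list"
  | Neg "('f, 'r) fm"
  | Conj "('f, 'r) fm" "('f, 'r) fm"
  | Ex nat "('f, 'r) fm"

text \<open>A structure on the whole type 'a: interpretation of function and relation symbols.\<close>
type_synonym ('f, 'r, 'a) struc = "('f \<Rightarrow> 'a list \<Rightarrow> 'a) \<times> ('r \<Rightarrow> 'a list \<Rightarrow> bool)"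

fun evalt :: "('f, 'r, 'a) struc \<Rightarrow> (nat \<Rightarrow> 'a) \<Rightarrow> 'f trm \<Rightarrow> 'a" where
  "evalt M s (Var i) = s i"
| "evalt M s (Fn f ts) = fst M f (map (evalt M s) ts)"

fun sat :: "('f, 'r, 'a) struc \<Rightarrow> ('f, 'r) fm \<Rightarrow> (nat \<Rightarrow> 'a) \<Rightarrow> bool" where
  "sat M (Eq t u) s = (evalt M s t = evalt M s u)"
| "sat M (Rel R ts) s = snd M R (map (evalt M s) ts)"
| "sat M (Neg \<phi>) s = (\<not> sat M \<phi> s)"
| "sat M (Conj \<phi> \<psi>) s = (sat M \<phi> s \<and> sat M \<psi> s)"
| "sat M (Ex i \<phi>) s = (\<exists>a. sat M \<phi> (s(i := a)))"

definition elem_emb :: "('f, 'r, 'a) struc \<Rightarrow> ('f, 'r, 'b) struc \<Rightarrow> ('a \<Rightarrow> 'b) \<Rightarrow> bool" where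
  "elem_emb M N j \<longleftrightarrow> inj j \<and> (\<forall>\<phi> s. sat M \<phi> s \<longleftrightarrow> sat N \<phi> (j \<circ> s))"

text \<open>Saturation: every finitely satisfiable 1-type over a parameter set A of cardinality
at most |B| is realised (i.e. the structure is |B|^+-saturated).  A type is a set of
formulas with assignments taking values in A; variable 0 is the free variable.\<close>
definition realises :: "('f, 'r, 'a) struc \<Rightarrow> (('f, 'r) fm \<times> (nat \<Rightarrow> 'a)) set \<Rightarrow> 'a \<Rightarrow> bool" where
  "realises M \<Sigma> b \<longleftrightarrow> (\<forall>(\<phi>, s) \<in> \<Sigma>. sat M \<phi> (s(0 := b)))"

definition saturated_for :: "('f, 'r, 'a) struc \<Rightarrow> 'b set \<Rightarrow> bool" where
  "saturated_for M B \<longleftrightarrow>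
     (\<forall>A :: 'a set. (\<exists>g. inj_on g A \<and> g ` A \<subseteq> B) \<longrightarrow>
       (\<forall>\<Sigma>. (\<forall>(\<phi>, s) \<in> \<Sigma>. range s \<subseteq> A) \<longrightarrow>
             (\<forall>F. finite F \<and> F \<subseteq> \<Sigma> \<longrightarrow> (\<exists>b. realises M F b)) \<longrightarrow>
             (\<exists>b. realises M \<Sigma> b)))"

definition def0 :: "('f, 'r, 'a) struc \<Rightarrow> nat \<Rightarrow> 'a list set \<Rightarrow> bool" where
  "def0 M n S \<longleftrightarrow> (\<exists>\<phi>. S = {xs. length xs = n \<and> (\<forall>s. (\<forall>i<n. s i = xs ! i) \<longrightarrow> sat M \<phi> s)})"

definition bounded_in :: "('f, 'r, 'a) struc \<Rightarrow> 'f \<Rightarrow> 'f \<Rightarrow> 'r \<Rightarrow> nat \<Rightarrow> 'a list set \<Rightarrow> bool" where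
  "bounded_in M plusS zeroS lessS r C \<longleftrightarrow>
     (let le = (\<lambda>a b. snd M lessS [a, b] \<or> a = b);
          z = fst M zeroS [];
          neg = (\<lambda>c. THE e. fst M plusS [e, c] = z)
      in \<exists>c. \<forall>xs \<in> C. length xs = r \<and> (\<forall>i<r. le (neg c) (xs ! i) \<and> le (xs ! i) c))"

definition totally_disconnected_space :: "'x topology \<Rightarrow> bool" where
  "totally_disconnected_space X \<longleftrightarrow> (\<forall>S. connectedin X S \<longrightarrow> S = {} \<or> (\<exists>a. S = {a}))"

definition profinite_space :: "'x topology \<Rightarrow> bool" where
  "profinite_space X \<longleftrightarrow> compact_space X \<and> Hausdorff_space X \<and> totally_disconnected_space X"

definition clopen_partition :: "'x topology \<Rightarrow> 'x set set \<Rightarrow> bool" where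
  "clopen_partition X U \<longleftrightarrow> finite U \<and> (\<forall>R\<in>U. openin X R \<and> closedin X R \<and> R \<noteq> {})
     \<and> (\<forall>R\<in>U. \<forall>S\<in>U. R \<noteq> S \<longrightarrow> R \<inter> S = {}) \<and> \<Union>U = topspace X"

definition refines :: "'x set set \<Rightarrow> 'x set set \<Rightarrow> bool" where
  "refines V U \<longleftrightarrow> (\<forall>R\<in>V. \<exists>S\<in>U. R \<subseteq> S)"

definition blk :: "'x set set \<Rightarrow> 'x \<Rightarrow> 'x set" where
  "blk U x = (THE R. R \<in> U \<and> x \<in> R)"

end

theory Submission
  imports Defs
begin

fun vars_t :: "'f trm \<Rightarrow> nat set" where
  "vars_t (Var i) = {i}"
| "vars_t (Fn f ts) = (\<Union>t\<in>set ts. vars_t t)"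

fun vars :: "('f, 'r) fm \<Rightarrow> nat set" where
  "vars (Eq t u) = vars_t t \<union> vars_t u"
| "vars (Rel R ts) = (\<Union>t\<in>set ts. vars_t t)"
| "vars (Neg \<phi>) = vars \<phi>"
| "vars (Conj \<phi> \<psi>) = vars \<phi> \<union> vars \<psi>"
| "vars (Ex i \<phi>) = insert i (vars \<phi>)"

lemma finite_vars_t: "finite (vars_t t)"
  by (induction t) auto

lemma finite_vars: "finite (vars \<phi>)"
  by (induction \<phi>) (auto simp: finite_vars_t)

fun rent :: "(nat \<Rightarrow> nat) \<Rightarrow> 'f trm \<Rightarrow> 'f trm" where
  "rent \<sigma> (Var i) = Var (\<sigma> i)"
| "rent \<sigma> (Fn f ts) = Fn f (map (rent \<sigma>) ts)"

fun ren :: "(nat \<Rightarrow> nat) \<Rightarrow> ('f, 'r) fm \<Rightarrow> ('f, 'r) fm" where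
  "ren \<sigma> (Eq t u) = Eq (rent \<sigma> t) (rent \<sigma> u)"
| "ren \<sigma> (Rel R ts) = Rel R (map (rent \<sigma>) ts)"
| "ren \<sigma> (Neg \<phi>) = Neg (ren \<sigma> \<phi>)"
| "ren \<sigma> (Conj \<phi> \<psi>) = Conj (ren \<sigma> \<phi>) (ren \<sigma> \<psi>)"
| "ren \<sigma> (Ex i \<phi>) = Ex (\<sigma> i) (ren \<sigma> \<phi>)"

lemma evalt_rent: "evalt M s (rent \<sigma> t) = evalt M (s \<circ> \<sigma>) t"
  by (induction t) (auto cong: map_cong)

lemma sat_ren: "inj \<sigma> \<Longrightarrow> sat M (ren \<sigma> \<phi>) s = sat M \<phi> (s \<circ> \<sigma>)"
proof (induction \<phi> arbitrary: s)
  case (Ex i \<phi>)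
  have e: "\<And>a. (s(\<sigma> i := a)) \<circ> \<sigma> = (s \<circ> \<sigma>)(i := a)"
    using Ex.prems by (auto simp: fun_eq_iff inj_eq)
  have "sat M (ren \<sigma> (Ex i \<phi>)) s = (\<exists>a. sat M \<phi> ((s(\<sigma> i := a)) \<circ> \<sigma>))"
    by (simp only: ren.simps sat.simps Ex.IH[OF Ex.prems])
  also have "\<dots> = sat M (Ex i \<phi>) (s \<circ> \<sigma>)" by (simp only: e sat.simps)
  finally show ?case .
qed (auto simp: evalt_rent comp_def cong: map_cong)

lemma evalt_cong: "(\<And>i. i \<in> vars_t t \<Longrightarrow> s i = s' i) \<Longrightarrow> evalt M s t = evalt M s' t"
proof (induction t)
  case (Fn f ts)
  have "map (evalt M s) ts = map (evalt M s') ts"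
    using Fn by (intro map_cong) auto
  then show ?case by (simp only: evalt.simps)
qed auto

lemma sat_cong: "(\<And>i. i \<in> vars \<phi> \<Longrightarrow> s i = s' i) \<Longrightarrow> sat M \<phi> s = sat M \<phi> s'"
proof (induction \<phi> arbitrary: s s')
  case (Eq t u)
  have "evalt M s t = evalt M s' t" "evalt M s u = evalt M s' u"
    by (rule evalt_cong; use Eq in simp)+
  then show ?case by simp
next
  case (Rel R ts)
  have "map (evalt M s) ts = map (evalt M s') ts"
  proof (rule map_cong[OF refl])
    fix x assume "x \<in> set ts"
    then show "evalt M s x = evalt M s' x"
      by (intro evalt_cong) (use Rel in auto)
  qed
  then show ?case by (simp only: sat.simps)
next
  case (Ex i \<phi>)
  have "\<And>a. sat M \<phi> (s(i := a)) = sat M \<phi> (s'(i := a))"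
  proof -
    fix a show "sat M \<phi> (s(i := a)) = sat M \<phi> (s'(i := a))"
      by (rule Ex.IH) (use Ex.prems in auto)
  qed
  then show ?case by simp
next
  case (Neg \<phi>)
  show ?case by (simp only: sat.simps, rule arg_cong[where f=Not], rule Neg.IH) (use Neg.prems in auto)
next
  case (Conj \<phi> \<psi>)
  have "sat M \<phi> s = sat M \<phi> s'" by (rule Conj.IH(1)) (use Conj.prems in auto)
  moreover have "sat M \<psi> s = sat M \<psi> s'" by (rule Conj.IH(2)) (use Conj.prems in auto)
  ultimately show ?case by simp
qed

fun Exs :: "nat list \<Rightarrow> ('f, 'r) fm \<Rightarrow> ('f, 'r) fm" where
  "Exs [] \<phi> = \<phi>"
| "Exs (v # vs) \<phi> = Ex v (Exs vs \<phi>)"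

lemma sat_Exs: "sat M (Exs vs \<phi>) s \<longleftrightarrow> (\<exists>s'. (\<forall>i. i \<notin> set vs \<longrightarrow> s' i = s i) \<and> sat M \<phi> s')"
proof (induction vs arbitrary: s)
  case Nil
  show ?case
  proof
    assume "sat M (Exs [] \<phi>) s" then show "\<exists>s'. (\<forall>i. i \<notin> set [] \<longrightarrow> s' i = s i) \<and> sat M \<phi> s'"
      by (intro exI[of _ s]) simp
  next
    assume "\<exists>s'. (\<forall>i. i \<notin> set [] \<longrightarrow> s' i = s i) \<and> sat M \<phi> s'"
    then obtain s' where "\<forall>i. s' i = s i" "sat M \<phi> s'" by auto
    then have "s' = s" by (simp add: fun_eq_iff)
    with \<open>sat M \<phi> s'\<close> show "sat M (Exs [] \<phi>) s" by simp
  qed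
next
  case (Cons v vs)
  show ?case
  proof
    assume "sat M (Exs (v # vs) \<phi>) s"
    then obtain a where "sat M (Exs vs \<phi>) (s(v := a))" by auto
    then obtain s' where s': "\<forall>i. i \<notin> set vs \<longrightarrow> s' i = (s(v := a)) i" "sat M \<phi> s'"
      unfolding Cons.IH by blast
    have "\<forall>i. i \<notin> set (v # vs) \<longrightarrow> s' i = s i"
    proof (intro allI impI)
      fix i assume "i \<notin> set (v # vs)"
      then have "i \<notin> set vs" "i \<noteq> v" by auto
      then show "s' i = s i" using s'(1) by simp
    qed
    then show "\<exists>s'. (\<forall>i. i \<notin> set (v # vs) \<longrightarrow> s' i = s i) \<and> sat M \<phi> s'"
      using s'(2) by blast
  next
    assume "\<exists>s'. (\<forall>i. i \<notin> set (v # vs) \<longrightarrow> s' i = s i) \<and> sat M \<phi> s'"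
    then obtain s' where s': "\<forall>i. i \<notin> set (v # vs) \<longrightarrow> s' i = s i" "sat M \<phi> s'" by blast
    have "\<forall>i. i \<notin> set vs \<longrightarrow> s' i = (s(v := s' v)) i"
    proof (intro allI impI)
      fix i assume "i \<notin> set vs"
      then show "s' i = (s(v := s' v)) i" using s'(1) by (cases "i = v") auto
    qed
    then have "sat M (Exs vs \<phi>) (s(v := s' v))"
      unfolding Cons.IH using s'(2) by blast
    then show "sat M (Exs (v # vs) \<phi>) s" by auto
  qed
qed

definition Alls :: "nat list \<Rightarrow> ('f, 'r) fm \<Rightarrow> ('f, 'r) fm" where
  "Alls vs \<phi> = Neg (Exs vs (Neg \<phi>))"

lemma sat_Alls: "sat M (Alls vs \<phi>) s \<longleftrightarrow> (\<forall>s'. (\<forall>i. i \<notin> set vs \<longrightarrow> s' i = s i) \<longrightarrow> sat M \<phi> s')"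
  by (auto simp: Alls_def sat_Exs)

definition Or :: "('f, 'r) fm \<Rightarrow> ('f, 'r) fm \<Rightarrow> ('f, 'r) fm" where
  "Or a b = Neg (Conj (Neg a) (Neg b))"
definition Imp :: "('f, 'r) fm \<Rightarrow> ('f, 'r) fm \<Rightarrow> ('f, 'r) fm" where
  "Imp a b = Neg (Conj a (Neg b))"
definition TT :: "('f, 'r) fm" where "TT = Eq (Var 0) (Var 0)"
definition FF :: "('f, 'r) fm" where "FF = Neg TT"

lemma sat_Or[simp]: "sat M (Or a b) s \<longleftrightarrow> sat M a s \<or> sat M b s" by (simp add: Or_def)
lemma sat_Imp[simp]: "sat M (Imp a b) s \<longleftrightarrow> (sat M a s \<longrightarrow> sat M b s)" by (simp add: Imp_def)
lemma sat_TT[simp]: "sat M TT s" by (simp add: TT_def)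
lemma sat_FF[simp]: "\<not> sat M FF s" by (simp add: FF_def)

definition Disj :: "('f, 'r) fm list \<Rightarrow> ('f, 'r) fm" where "Disj \<phi>s = foldr Or \<phi>s FF"
definition Conjs :: "('f, 'r) fm list \<Rightarrow> ('f, 'r) fm" where "Conjs \<phi>s = foldr Conj \<phi>s TT"

lemma sat_Disj[simp]: "sat M (Disj \<phi>s) s \<longleftrightarrow> (\<exists>\<phi>\<in>set \<phi>s. sat M \<phi> s)"
  by (induction \<phi>s) (auto simp: Disj_def)
lemma sat_Conjs[simp]: "sat M (Conjs \<phi>s) s \<longleftrightarrow> (\<forall>\<phi>\<in>set \<phi>s. sat M \<phi> s)"
  by (induction \<phi>s) (auto simp: Conjs_def)

lemma def0_fm_distinct:
  assumes "def0 M n S" "distinct ts" "length ts = n"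
  shows "\<exists>\<psi>. \<forall>t. sat M \<psi> t \<longleftrightarrow> map t ts \<in> S"
proof -
  obtain \<phi> where S: "S = {xs. length xs = n \<and> (\<forall>s. (\<forall>i<n. s i = xs ! i) \<longrightarrow> sat M \<phi> s)}"
    using assms(1) unfolding def0_def by blast
  define K where "K = Suc (Max (insert 0 (set ts)))"
  have tsK: "\<And>i. i < n \<Longrightarrow> ts ! i < K"
  proof -
    fix i assume "i < n"
    then have "ts ! i \<in> insert 0 (set ts)" using assms(3) by auto
    then have "ts ! i \<le> Max (insert 0 (set ts))" by (intro Max_ge) auto
    then show "ts ! i < K" unfolding K_def by simp
  qed
  define \<sigma> where "\<sigma> i = (if i < n then ts ! i else K + i)" for i
  have inj: "inj \<sigma>"
  proof (rule injI)
    fix i i' assume eq: "\<sigma> i = \<sigma> i'"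
    show "i = i'"
    proof (cases "i < n")
      case True
      show ?thesis
      proof (cases "i' < n")
        case True
        with \<open>i < n\<close> eq show ?thesis
          using assms(2,3) nth_eq_iff_index_eq unfolding \<sigma>_def by fastforce
      next
        case False
        with \<open>i < n\<close> eq tsK[of i] show ?thesis unfolding \<sigma>_def by simp
      qed
    next
      case False
      show ?thesis
      proof (cases "i' < n")
        case True
        with \<open>\<not> i < n\<close> eq tsK[of i'] show ?thesis unfolding \<sigma>_def by simp
      next
        case False
        with \<open>\<not> i < n\<close> eq show ?thesis unfolding \<sigma>_def by simp
      qed
    qed
  qed
  define ws where "ws = map (\<lambda>i. K + i) (filter (\<lambda>i. n \<le> i) (sorted_list_of_set (vars \<phi>)))"
  have ws: "set ws = {K + i | i. i \<in> vars \<phi> \<and> n \<le> i}"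
    unfolding ws_def using finite_vars[of \<phi>] by auto
  have tsws: "\<And>i. i < n \<Longrightarrow> ts ! i \<notin> set ws"
    using tsK unfolding ws by fastforce
  define \<psi> where "\<psi> = Alls ws (ren \<sigma> \<phi>)"
  have "sat M \<psi> t \<longleftrightarrow> map t ts \<in> S" for t
  proof
    assume H: "sat M \<psi> t"
    have "\<forall>s. (\<forall>i<n. s i = map t ts ! i) \<longrightarrow> sat M \<phi> s"
    proof (intro allI impI)
      fix s assume s: "\<forall>i<n. s i = map t ts ! i"
      define t' where "t' v = (if v \<in> set ws then s (v - K) else t v)" for v
      have "\<forall>v. v \<notin> set ws \<longrightarrow> t' v = t v" unfolding t'_def by simp
      then have "sat M (ren \<sigma> \<phi>) t'" using H unfolding \<psi>_def sat_Alls by blast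
      then have A: "sat M \<phi> (t' \<circ> \<sigma>)" using sat_ren[OF inj] by blast
      have "sat M \<phi> (t' \<circ> \<sigma>) = sat M \<phi> s"
      proof (rule sat_cong)
        fix i assume i: "i \<in> vars \<phi>"
        show "(t' \<circ> \<sigma>) i = s i"
        proof (cases "i < n")
          case True
          then show ?thesis using s tsws[OF True] assms(3) unfolding t'_def \<sigma>_def by simp
        next
          case False
          then have "K + i \<in> set ws" using i unfolding ws by auto
          then show ?thesis using False unfolding t'_def \<sigma>_def by simp
        qed
      qed
      with A show "sat M \<phi> s" by simp
    qed
    then show "map t ts \<in> S" unfolding S using assms(3) by simp
  next
    assume H: "map t ts \<in> S"
    show "sat M \<psi> t"
      unfolding \<psi>_def sat_Alls
    proof (intro allI impI)
      fix t' assume t': "\<forall>i. i \<notin> set ws \<longrightarrow> t' i = t i"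
      have "\<forall>i<n. (t' \<circ> \<sigma>) i = map t ts ! i"
        using t' tsws assms(3) unfolding \<sigma>_def by simp
      then have "sat M \<phi> (t' \<circ> \<sigma>)" using H unfolding S by blast
      then show "sat M (ren \<sigma> \<phi>) t'" using sat_ren[OF inj] by blast
    qed
  qed
  then show ?thesis by blast
qed

lemma def0_fm:
  assumes "def0 M (length ts) S"
  shows "\<exists>\<psi>. \<forall>t. sat M \<psi> t \<longleftrightarrow> map t ts \<in> S"
proof -
  define n where "n = length ts"
  define K where "K = Suc (Max (insert 0 (set ts)))"
  have tsK: "\<And>i. i < n \<Longrightarrow> ts ! i < K"
  proof -
    fix i assume "i < n"
    then have "ts ! i \<in> insert 0 (set ts)" unfolding n_def by auto
    then have "ts ! i \<le> Max (insert 0 (set ts))" by (intro Max_ge) auto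
    then show "ts ! i < K" unfolding K_def by simp
  qed
  define zs where "zs = [K..<K+n]"
  have zs: "distinct zs" "length zs = n" "set zs = {K..<K+n}" "\<And>i. i < n \<Longrightarrow> zs ! i = K + i"
    unfolding zs_def by auto
  obtain \<psi> where \<psi>: "\<forall>t. sat M \<psi> t \<longleftrightarrow> map t zs \<in> S"
    using def0_fm_distinct[of M n S zs] assms zs unfolding n_def by blast
  define \<theta> where "\<theta> = Exs zs (Conj (Conjs (map (\<lambda>i. Eq (Var (zs ! i)) (Var (ts ! i))) [0..<n])) \<psi>)"
  have tsz: "\<And>i. i < n \<Longrightarrow> ts ! i \<notin> set zs" using tsK zs(3) by fastforce
  have "sat M \<theta> t \<longleftrightarrow> map t ts \<in> S" for t
  proof
    assume "sat M \<theta> t"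
    then obtain t' where t': "\<forall>i. i \<notin> set zs \<longrightarrow> t' i = t i"
      "\<forall>i<n. t' (zs ! i) = t' (ts ! i)" "map t' zs \<in> S"
      unfolding \<theta>_def sat_Exs using \<psi> by auto
    have "map t' zs = map t ts"
      using t' tsz zs(2) unfolding n_def by (auto intro!: nth_equalityI)
    then show "map t ts \<in> S" using t'(3) by simp
  next
    assume H: "map t ts \<in> S"
    define t' where "t' v = (if K \<le> v \<and> v < K + n then t (ts ! (v - K)) else t v)" for v
    have 1: "\<forall>i. i \<notin> set zs \<longrightarrow> t' i = t i" unfolding t'_def zs(3) by auto
    have 2: "\<forall>i<n. t' (zs ! i) = t' (ts ! i)"
    proof (intro allI impI)
      fix i assume i: "i < n"
      have "\<not> K \<le> ts ! i" using tsK[OF i] by simp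
      then show "t' (zs ! i) = t' (ts ! i)" using i zs(4)[OF i] unfolding t'_def by simp
    qed
    have "map t' zs = map t ts"
      using zs unfolding t'_def n_def by (auto intro!: nth_equalityI)
    with H have 3: "map t' zs \<in> S" by simp
    show "sat M \<theta> t"
      unfolding \<theta>_def sat_Exs using 1 2 3 \<psi> by (intro exI[of _ t']) auto
  qed
  then show ?thesis by blast
qed

definition fm_of :: "('f, 'r, 'a) struc \<Rightarrow> 'a list set \<Rightarrow> nat list \<Rightarrow> ('f, 'r) fm" where
  "fm_of M S ts = (SOME \<psi>. \<forall>t. sat M \<psi> t \<longleftrightarrow> map t ts \<in> S)"

lemma sat_fm_of:
  assumes "def0 M (length ts) S"
  shows "sat M (fm_of M S ts) t \<longleftrightarrow> map t ts \<in> S"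
  using someI_ex[OF def0_fm[OF assms]] unfolding fm_of_def by blast

lemma realize:
  fixes M :: "('f, 'r, 'a) struc" and B :: "'b set"
  assumes satB: "saturated_for M B"
    and injB: "\<forall>A::'a set. finite A \<longrightarrow> (\<exists>g. inj_on g A \<and> g ` A \<subseteq> B)"
    and fin: "finite (range s)"
    and fs: "\<forall>F. finite F \<and> F \<subseteq> \<Phi> \<longrightarrow> (\<exists>t. (\<forall>i. i \<notin> set vs \<longrightarrow> t i = s i) \<and> (\<forall>\<phi>\<in>F. sat M \<phi> t))"
  shows "\<exists>t. (\<forall>i. i \<notin> set vs \<longrightarrow> t i = s i) \<and> (\<forall>\<phi>\<in>\<Phi>. sat M \<phi> t)"
  using fin fs
proof (induction vs arbitrary: s)
  case Nil
  have "\<forall>\<phi>\<in>\<Phi>. sat M \<phi> s"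
  proof
    fix \<phi> assume "\<phi> \<in> \<Phi>"
    then obtain t where "\<forall>i. t i = s i" "sat M \<phi> t"
      using Nil.prems(2)[rule_format, of "{\<phi>}"] by auto
    then have "t = s" by (simp add: fun_eq_iff)
    with \<open>sat M \<phi> t\<close> show "sat M \<phi> s" by simp
  qed
  then show ?case by (intro exI[of _ s]) simp
next
  case (Cons v vs)
  define \<sigma> where "\<sigma> i = (if i = 0 then v else if i = v then 0 else i)" for i
  have \<sigma>\<sigma>: "\<sigma> (\<sigma> i) = i" for i unfolding \<sigma>_def by auto
  have inj: "inj \<sigma>" by (metis \<sigma>\<sigma> injI)
  have \<sigma>v: "\<sigma> v = 0" unfolding \<sigma>_def by auto
  have \<sigma>0: "\<sigma> i = 0 \<longleftrightarrow> i = v" for i unfolding \<sigma>_def by auto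
  have comp: "((s \<circ> \<sigma>)(0 := b)) \<circ> \<sigma> = s(v := b)" for b
    by (auto simp: fun_eq_iff \<sigma>0 \<sigma>\<sigma>)
  define \<Sigma> where "\<Sigma> = {(ren \<sigma> (Exs vs (Conjs Fl)), s \<circ> \<sigma>) | Fl. set Fl \<subseteq> \<Phi>}"
  have rng: "\<forall>(\<phi>, s0)\<in>\<Sigma>. range s0 \<subseteq> range s" unfolding \<Sigma>_def by auto
  obtain g where g: "inj_on g (range s)" "g ` range s \<subseteq> B" using injB Cons.prems(1) by blast
  have fsat: "\<exists>b. realises M F b" if F: "finite F" "F \<subseteq> \<Sigma>" for F
  proof -
    have "\<forall>e\<in>F. \<exists>Fl. set Fl \<subseteq> \<Phi> \<and> e = (ren \<sigma> (Exs vs (Conjs Fl)), s \<circ> \<sigma>)"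
      using F(2) unfolding \<Sigma>_def by blast
    then obtain L where L: "\<forall>e\<in>F. set (L e) \<subseteq> \<Phi> \<and> e = (ren \<sigma> (Exs vs (Conjs (L e))), s \<circ> \<sigma>)"
      by metis
    define G where "G = (\<Union>e\<in>F. set (L e))"
    have "finite G" "G \<subseteq> \<Phi>" unfolding G_def using F(1) L by auto
    then obtain t where t: "\<forall>i. i \<notin> set (v # vs) \<longrightarrow> t i = s i" "\<forall>\<phi>\<in>G. sat M \<phi> t"
      using Cons.prems(2) by blast
    have "realises M F (t v)"
      unfolding realises_def
    proof (intro ballI, clarify)
      fix \<phi> s0 assume e: "(\<phi>, s0) \<in> F"
      define Fl where "Fl = L (\<phi>, s0)"
      have e1: "\<phi> = ren \<sigma> (Exs vs (Conjs Fl))" and e2: "s0 = s \<circ> \<sigma>"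
        using L e unfolding Fl_def by blast+
      have agree: "\<forall>i. i \<notin> set vs \<longrightarrow> t i = (s(v := t v)) i"
      proof (intro allI impI)
        fix i assume "i \<notin> set vs"
        then show "t i = (s(v := t v)) i" using t(1) by (cases "i = v") auto
      qed
      have "set Fl \<subseteq> G" using e unfolding G_def Fl_def by blast
      then have "\<forall>\<phi>\<in>set Fl. sat M \<phi> t" using t(2) by blast
      then have "sat M (Exs vs (Conjs Fl)) (s(v := t v))"
        unfolding sat_Exs using agree by (intro exI[of _ t]) simp
      then have "sat M (ren \<sigma> (Exs vs (Conjs Fl))) ((s \<circ> \<sigma>)(0 := t v))"
        unfolding sat_ren[OF inj] comp .
      then show "sat M \<phi> (s0(0 := t v))"
        unfolding e1 e2 .
    qed
    then show ?thesis by blast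
  qed
  have "\<exists>b. realises M \<Sigma> b"
    using satB[unfolded saturated_for_def, rule_format, of "range s" \<Sigma>] g rng fsat by blast
  then obtain b where b: "realises M \<Sigma> b" by blast
  have bF: "sat M (Exs vs (Conjs Fl)) (s(v := b))" if "set Fl \<subseteq> \<Phi>" for Fl
  proof -
    have "(ren \<sigma> (Exs vs (Conjs Fl)), s \<circ> \<sigma>) \<in> \<Sigma>" using that unfolding \<Sigma>_def by blast
    then have "sat M (ren \<sigma> (Exs vs (Conjs Fl))) ((s \<circ> \<sigma>)(0 := b))"
      using b unfolding realises_def by blast
    then show ?thesis unfolding sat_ren[OF inj] comp .
  qed
  have fin': "finite (range (s(v := b)))"
  proof (rule finite_subset[OF _ finite_insert[THEN iffD2, OF Cons.prems(1)]])
    show "range (s(v := b)) \<subseteq> insert b (range s)" by auto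
  qed
  have fs': "\<forall>F. finite F \<and> F \<subseteq> \<Phi> \<longrightarrow> (\<exists>t. (\<forall>i. i \<notin> set vs \<longrightarrow> t i = (s(v := b)) i) \<and> (\<forall>\<phi>\<in>F. sat M \<phi> t))"
  proof (intro allI impI)
    fix F assume F: "finite F \<and> F \<subseteq> \<Phi>"
    then obtain Fl where "set Fl = F" using finite_list by blast
    then show "\<exists>t. (\<forall>i. i \<notin> set vs \<longrightarrow> t i = (s(v := b)) i) \<and> (\<forall>\<phi>\<in>F. sat M \<phi> t)"
      using bF[of Fl] F unfolding sat_Exs by auto
  qed
  obtain t where t: "\<forall>i. i \<notin> set vs \<longrightarrow> t i = (s(v := b)) i" "\<forall>\<phi>\<in>\<Phi>. sat M \<phi> t"
    using Cons.IH[OF fin' fs'] by blast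
  have "\<forall>i. i \<notin> set (v # vs) \<longrightarrow> t i = s i" using t(1) by auto
  with t(2) show ?case by blast
qed

lemma blk_unique:
  assumes "clopen_partition X U" "x \<in> topspace X"
  shows "\<exists>!R. R \<in> U \<and> x \<in> R"
proof -
  from assms have "x \<in> \<Union>U" unfolding clopen_partition_def by auto
  then obtain R where "R \<in> U" "x \<in> R" by blast
  moreover have "\<And>R'. R' \<in> U \<Longrightarrow> x \<in> R' \<Longrightarrow> R' = R"
    using assms(1) \<open>R \<in> U\<close> \<open>x \<in> R\<close> unfolding clopen_partition_def by blast
  ultimately show ?thesis by blast
qed

lemma blk_mem:
  assumes "clopen_partition X U" "x \<in> topspace X"
  shows "blk U x \<in> U" "x \<in> blk U x"
  using theI'[OF blk_unique[OF assms]] unfolding blk_def by auto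

lemma blk_eq:
  assumes "clopen_partition X U" "R \<in> U" "x \<in> R"
  shows "blk U x = R"
proof -
  have x: "x \<in> topspace X" using assms unfolding clopen_partition_def by blast
  show ?thesis using blk_unique[OF assms(1) x] blk_mem[OF assms(1) x] assms(2,3) by blast
qed

lemma blk_sub:
  assumes "clopen_partition X V" "clopen_partition X U" "refines V U" "x \<in> topspace X"
  shows "blk V x \<subseteq> blk U x"
proof -
  have "\<exists>S\<in>U. blk V x \<subseteq> S"
    using assms(3) blk_mem(1)[OF assms(1,4)] unfolding refines_def by (rule bspec)
  then obtain S where S: "S \<in> U" "blk V x \<subseteq> S" by blast
  then have "x \<in> S" using blk_mem(2)[OF assms(1,4)] by blast
  then have "blk U x = S" using blk_eq[OF assms(2) S(1)] by simp
  then show ?thesis using S by simp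
qed

lemma blk_refine_eq:
  assumes "clopen_partition X V" "clopen_partition X U" "refines V U"
    "x \<in> topspace X" "y \<in> topspace X" "blk V x = blk V y"
  shows "blk U x = blk U y"
proof -
  have "y \<in> blk V y" by (rule blk_mem(2)[OF assms(1,5)])
  then have "y \<in> blk V x" using assms(6) by simp
  then have "y \<in> blk U x" using blk_sub[OF assms(1-3,4)] by (rule subsetD[rotated])
  then have "blk U y = blk U x" by (rule blk_eq[OF assms(2) blk_mem(1)[OF assms(2,4)]])
  then show ?thesis by simp
qed

lemma refines_trans:
  assumes "refines A B" "refines B C" shows "refines A C"
  unfolding refines_def
proof
  fix R assume "R \<in> A"
  then obtain S where S: "S \<in> B" "R \<subseteq> S" using assms(1) unfolding refines_def by blast
  then obtain S' where S': "S' \<in> C" "S \<subseteq> S'" using assms(2) unfolding refines_def by blast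
  have "R \<subseteq> S'" using S(2) S'(2) by (rule order_trans)
  then show "\<exists>S\<in>C. R \<subseteq> S" using S'(1) by blast
qed

lemma refines_refl: "refines A A"
  unfolding refines_def
proof
  fix R assume "R \<in> A"
  then show "\<exists>S\<in>A. R \<subseteq> S" by (intro bexI[of _ R]) simp_all
qed

definition meet :: "'x set set \<Rightarrow> 'x set set \<Rightarrow> 'x set set" where
  "meet U U' = {R \<inter> R' | R R'. R \<in> U \<and> R' \<in> U' \<and> R \<inter> R' \<noteq> {}}"

lemma meet_partition:
  assumes "clopen_partition X U" "clopen_partition X U'"
  shows "clopen_partition X (meet U U')" "refines (meet U U') U" "refines (meet U U') U'"
proof -
  have fU: "finite U" and oU: "\<forall>R\<in>U. openin X R \<and> closedin X R \<and> R \<noteq> {}"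
    and dU: "\<forall>R\<in>U. \<forall>S\<in>U. R \<noteq> S \<longrightarrow> R \<inter> S = {}" and uU: "\<Union>U = topspace X"
    using assms(1) unfolding clopen_partition_def by (meson, meson, meson, meson)
  have fU': "finite U'" and oU': "\<forall>R\<in>U'. openin X R \<and> closedin X R \<and> R \<noteq> {}"
    and dU': "\<forall>R\<in>U'. \<forall>S\<in>U'. R \<noteq> S \<longrightarrow> R \<inter> S = {}" and uU': "\<Union>U' = topspace X"
    using assms(2) unfolding clopen_partition_def by (meson, meson, meson, meson)
  have fin: "finite (meet U U')"
  proof -
    have "meet U U' \<subseteq> (\<lambda>(R, R'). R \<inter> R') ` (U \<times> U')" unfolding meet_def by auto
    moreover have "finite (U \<times> U')" using fU fU' by simp
    ultimately show ?thesis by (meson finite_imageI finite_subset)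
  qed
  have oc: "\<forall>Q\<in>meet U U'. openin X Q \<and> closedin X Q \<and> Q \<noteq> {}"
  proof
    fix Q assume "Q \<in> meet U U'"
    then obtain R R' where Q: "Q = R \<inter> R'" "R \<in> U" "R' \<in> U'" "R \<inter> R' \<noteq> {}" unfolding meet_def by blast
    have "openin X R" "closedin X R" using oU Q(2) by auto
    moreover have "openin X R'" "closedin X R'" using oU' Q(3) by auto
    ultimately show "openin X Q \<and> closedin X Q \<and> Q \<noteq> {}" using Q(1,4) by (simp add: openin_Int closedin_Int)
  qed
  have dis: "\<forall>Q\<in>meet U U'. \<forall>Q'\<in>meet U U'. Q \<noteq> Q' \<longrightarrow> Q \<inter> Q' = {}"
  proof (intro ballI impI)
    fix Q Q' assume "Q \<in> meet U U'" "Q' \<in> meet U U'" and ne: "Q \<noteq> Q'"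
    then obtain R1 R1' R2 R2' where Q: "Q = R1 \<inter> R1'" "Q' = R2 \<inter> R2'" "R1 \<in> U" "R2 \<in> U" "R1' \<in> U'" "R2' \<in> U'"
      unfolding meet_def by blast
    show "Q \<inter> Q' = {}"
    proof (cases "R1 = R2")
      case True
      then have "R1' \<noteq> R2'" using ne Q(1,2) by metis
      then have "R1' \<inter> R2' = {}" using dU' Q(5,6) by blast
      then show ?thesis using Q(1,2) by blast
    next
      case False
      then have "R1 \<inter> R2 = {}" using dU Q(3,4) by blast
      then show ?thesis using Q(1,2) by blast
    qed
  qed
  have un: "\<Union>(meet U U') = topspace X"
  proof
    show "\<Union>(meet U U') \<subseteq> topspace X"
    proof
      fix x assume "x \<in> \<Union>(meet U U')"
      then obtain R R' where "x \<in> R" "R \<in> U" unfolding meet_def by blast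
      then show "x \<in> topspace X" using uU by blast
    qed
    show "topspace X \<subseteq> \<Union>(meet U U')"
    proof
      fix x assume x: "x \<in> topspace X"
      have "blk U x \<inter> blk U' x \<in> meet U U'"
        using blk_mem[OF assms(1) x] blk_mem[OF assms(2) x] unfolding meet_def by blast
      then show "x \<in> \<Union>(meet U U')" using blk_mem[OF assms(1) x] blk_mem[OF assms(2) x] by blast
    qed
  qed
  show "clopen_partition X (meet U U')" unfolding clopen_partition_def using fin oc dis un by (intro conjI)
  show "refines (meet U U') U" unfolding refines_def
  proof
    fix Q assume "Q \<in> meet U U'"
    then obtain R R' where "Q = R \<inter> R'" "R \<in> U" "R' \<in> U'" unfolding meet_def by blast
    then show "\<exists>S\<in>U. Q \<subseteq> S" by (intro bexI[of _ R]) auto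
  qed
  show "refines (meet U U') U'" unfolding refines_def
  proof
    fix Q assume "Q \<in> meet U U'"
    then obtain R R' where "Q = R \<inter> R'" "R \<in> U" "R' \<in> U'" unfolding meet_def by blast
    then show "\<exists>S\<in>U'. Q \<subseteq> S" by (intro bexI[of _ R']) auto
  qed
qed

lemma trivial_partition:
  assumes "topspace X \<noteq> {}"
  shows "clopen_partition X {topspace X}"
  using assms unfolding clopen_partition_def by auto

lemma common_refinement:
  assumes "finite \<F>" "\<forall>U\<in>\<F>. clopen_partition X U" "topspace X \<noteq> {}"
  shows "\<exists>W. clopen_partition X W \<and> (\<forall>U\<in>\<F>. refines W U)"
  using assms(1,2)
proof (induction rule: finite_induct)
  case empty
  then show ?case using trivial_partition[OF assms(3)] by blast
next
  case (insert U \<F>)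
  then obtain W where W: "clopen_partition X W" "\<forall>U\<in>\<F>. refines W U" by blast
  have U: "clopen_partition X U" using insert by blast
  show ?case
    using meet_partition[OF W(1) U] W(2) refines_trans by blast
qed

lemma profinite_separate:
  assumes "profinite_space X" "x \<in> topspace X" "y \<in> topspace X" "x \<noteq> y"
  shows "\<exists>U. clopen_partition X U \<and> blk U x \<noteq> blk U y"
proof -
  have cs: "compact_space X" and hs: "Hausdorff_space X" and td: "totally_disconnected_space X"
    using assms(1) unfolding profinite_space_def by auto
  have "\<not> quasi_component_of X x y"
  proof
    assume "quasi_component_of X x y"
    then have "connected_component_of X x y"
      using quasi_eq_connected_component_of[of X x] cs hs by simp
    then obtain T where "connectedin X T" "x \<in> T" "y \<in> T"
      unfolding connected_component_of_def by blast
    then show False using td assms(4) unfolding totally_disconnected_space_def by blast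
  qed
  then obtain T where T: "x \<in> T" "closedin X T" "openin X T" "y \<notin> T"
    using assms(2,3) unfolding quasi_component_of by blast
  define U where "U = {T, topspace X - T}"
  have TX: "T \<subseteq> topspace X" using T(3) openin_subset by blast
  have c2: "closedin X (topspace X - T)" using T(3) by (simp add: closedin_diff)
  have o2: "openin X (topspace X - T)" using T(2) by (simp add: openin_diff)
  have ne2: "topspace X - T \<noteq> {}" using assms(3) T(4) by blast
  have ne1: "T \<noteq> {}" using T(1) by blast
  have d: "T \<inter> (topspace X - T) = {}" by blast
  have un: "\<Union>{T, topspace X - T} = topspace X" using TX by blast
  have cp: "clopen_partition X U"
    unfolding clopen_partition_def U_def using T(2,3) c2 o2 ne1 ne2 d un by blast
  have "blk U x = T" using blk_eq[OF cp, of T x] T(1) unfolding U_def by simp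
  moreover have "blk U y = topspace X - T" using blk_eq[OF cp, of "topspace X - T" y] T(4) assms(3) unfolding U_def by simp
  ultimately show ?thesis using cp T(1) by blast
qed

lemma ellis:
  fixes S :: "'b set" and mul :: "'b \<Rightarrow> 'b \<Rightarrow> 'b" and cl :: "'b set \<Rightarrow> bool"
  assumes ne: "S \<noteq> {}" and clS: "cl S" and cl_sub: "\<And>K. cl K \<Longrightarrow> K \<subseteq> S"
    and cl_Inter: "\<And>\<K>. \<K> \<noteq> {} \<Longrightarrow> (\<forall>K\<in>\<K>. cl K) \<Longrightarrow> cl (\<Inter>\<K>)"
    and compact: "\<And>\<K>. (\<forall>K\<in>\<K>. cl K) \<Longrightarrow> (\<forall>F. finite F \<and> F \<subseteq> \<K> \<longrightarrow> \<Inter>F \<inter> S \<noteq> {}) \<Longrightarrow> \<Inter>\<K> \<inter> S \<noteq> {}"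
    and closed_mul: "\<And>x y. x \<in> S \<Longrightarrow> y \<in> S \<Longrightarrow> mul x y \<in> S"
    and assoc: "\<And>x y z. x \<in> S \<Longrightarrow> y \<in> S \<Longrightarrow> z \<in> S \<Longrightarrow> mul (mul x y) z = mul x (mul y z)"
    and transl: "\<And>K a. cl K \<Longrightarrow> a \<in> S \<Longrightarrow> cl ((\<lambda>k. mul k a) ` K)"
    and fib: "\<And>a. a \<in> S \<Longrightarrow> cl {x\<in>S. mul x a = a}"
  shows "\<exists>e\<in>S. mul e e = e"
proof -
  define \<A> where "\<A> = {A. cl A \<and> A \<noteq> {} \<and> (\<forall>x\<in>A. \<forall>y\<in>A. mul x y \<in> A)}"
  have SA: "S \<in> \<A>" unfolding \<A>_def using clS ne closed_mul by blast
  define \<A>c where "\<A>c = (\<lambda>A. S - A) ` \<A>"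
  have Asub: "A \<subseteq> S" if "A \<in> \<A>" for A using that cl_sub unfolding \<A>_def by blast
  have "\<exists>M\<in>\<A>c. \<forall>X\<in>\<A>c. M \<subseteq> X \<longrightarrow> X = M"
  proof (rule Zorn_Lemma2, rule ballI)
    fix C assume C: "C \<in> chains \<A>c"
    show "\<exists>U\<in>\<A>c. \<forall>X\<in>C. X \<subseteq> U"
    proof (cases "C = {}")
      case True
      then show ?thesis unfolding \<A>c_def using SA by blast
    next
      case False
      define D where "D = (\<lambda>X. S - X) ` C"
      have CA: "C \<subseteq> \<A>c" using C unfolding chains_def by blast
      have DA: "D \<subseteq> \<A>"
      proof
        fix A assume "A \<in> D"
        then obtain X where X: "X \<in> C" "A = S - X" unfolding D_def by blast
        then obtain A' where "A' \<in> \<A>" "X = S - A'" using CA unfolding \<A>c_def by blast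
        then have "A = A'" using X(2) Asub[of A'] by blast
        then show "A \<in> \<A>" using \<open>A' \<in> \<A>\<close> by simp
      qed
      have Dne: "D \<noteq> {}" using False unfolding D_def by blast
      have Dch: "subset.chain UNIV D"
        unfolding subset_chain_def
      proof (intro conjI ballI)
        show "D \<subseteq> UNIV" by simp
      next
        fix A B assume "A \<in> D" "B \<in> D"
        then obtain X Y where "X \<in> C" "Y \<in> C" "A = S - X" "B = S - Y" unfolding D_def by blast
        moreover have "X \<subseteq> Y \<or> Y \<subseteq> X" using C calculation(1,2) unfolding chains_def chain_subset_def by blast
        ultimately show "A \<subseteq> B \<or> B \<subseteq> A" by blast
      qed
      have clD: "\<forall>K\<in>D. cl K" using DA unfolding \<A>_def by blast
      have fip: "\<forall>F. finite F \<and> F \<subseteq> D \<longrightarrow> \<Inter>F \<inter> S \<noteq> {}"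
      proof (intro allI impI)
        fix F assume F: "finite F \<and> F \<subseteq> D"
        show "\<Inter>F \<inter> S \<noteq> {}"
        proof (cases "F = {}")
          case True then show ?thesis using ne by simp
        next
          case False
          have "subset.chain UNIV F" using Dch F unfolding subset_chain_def by blast
          then have "\<Inter>F \<in> F" using Inter_in_chain[of F UNIV] F False by blast
          then have "\<Inter>F \<in> \<A>" using F DA by blast
          then show ?thesis using Asub unfolding \<A>_def by blast
        qed
      qed
      have I: "\<Inter>D \<in> \<A>"
      proof -
        have "cl (\<Inter>D)" using cl_Inter[OF Dne clD] .
        moreover have "\<Inter>D \<noteq> {}" using compact[OF clD fip] by blast
        moreover have "\<forall>x\<in>\<Inter>D. \<forall>y\<in>\<Inter>D. mul x y \<in> \<Inter>D"
        proof (intro ballI InterI)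
          fix x y A assume "x \<in> \<Inter>D" "y \<in> \<Inter>D" "A \<in> D"
          then have "x \<in> A" "y \<in> A" "A \<in> \<A>" using DA by auto
          then show "mul x y \<in> A" unfolding \<A>_def by blast
        qed
        ultimately show ?thesis unfolding \<A>_def by blast
      qed
      have "S - \<Inter>D \<in> \<A>c" using I unfolding \<A>c_def by blast
      moreover have "\<forall>X\<in>C. X \<subseteq> S - \<Inter>D"
      proof
        fix X assume X: "X \<in> C"
        then have "S - X \<in> D" unfolding D_def by blast
        moreover have "X \<subseteq> S" using X CA unfolding \<A>c_def by blast
        ultimately show "X \<subseteq> S - \<Inter>D" by blast
      qed
      ultimately show ?thesis by blast
    qed
  qed
  then obtain M where M: "M \<in> \<A>c" "\<forall>X\<in>\<A>c. M \<subseteq> X \<longrightarrow> X = M" by blast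
  from M(1) obtain A0 where A0a: "A0 \<in> \<A>" "M = S - A0" unfolding \<A>c_def by blast
  have A0: "A0 \<in> \<A>" "\<forall>X\<in>\<A>c. S - A0 \<subseteq> X \<longrightarrow> X = S - A0"
    using A0a M(2) by simp_all
  have minimal: "A = A0" if "A \<in> \<A>" "A \<subseteq> A0" for A
  proof -
    have 1: "S - A \<in> \<A>c" using that(1) unfolding \<A>c_def by (rule imageI)
    have 2: "S - A0 \<subseteq> S - A" using that(2) by (rule Diff_mono[OF order_refl])
    have "S - A = S - A0" using A0(2)[rule_format, OF 1 2] .
    then have "S - (S - A) = S - (S - A0)" by simp
    then show ?thesis using Asub[OF that(1)] Asub[OF A0(1)] by (simp add: double_diff)
  qed
  have A0p: "cl A0" "A0 \<noteq> {}" "\<forall>x\<in>A0. \<forall>y\<in>A0. mul x y \<in> A0" using A0(1) unfolding \<A>_def by blast+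
  obtain a where a: "a \<in> A0" using A0p(2) by blast
  have aS: "a \<in> S" using a Asub[OF A0(1)] by blast
  have A0S: "A0 \<subseteq> S" using Asub[OF A0(1)] .
  define Aa where "Aa = (\<lambda>k. mul k a) ` A0"
  have "Aa \<in> \<A>"
    unfolding \<A>_def
  proof (intro CollectI conjI)
    show "cl Aa" unfolding Aa_def by (rule transl[OF A0p(1) aS])
    show "Aa \<noteq> {}" unfolding Aa_def using A0p(2) by blast
    show "\<forall>x\<in>Aa. \<forall>y\<in>Aa. mul x y \<in> Aa"
    proof (intro ballI)
      fix x y assume "x \<in> Aa" "y \<in> Aa"
      then obtain x' y' where xy: "x' \<in> A0" "y' \<in> A0" "x = mul x' a" "y = mul y' a" unfolding Aa_def by blast
      have "mul x y = mul (mul (mul x' a) y') a"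
        using xy A0S aS closed_mul assoc by (simp add: subset_iff)
      moreover have "mul (mul x' a) y' \<in> A0" using xy(1,2) a A0p(3) by blast
      ultimately show "mul x y \<in> Aa" unfolding Aa_def by blast
    qed
  qed
  moreover have "Aa \<subseteq> A0" unfolding Aa_def using A0p(3) a by blast
  ultimately have "Aa = A0" using minimal by blast
  then have "a \<in> Aa" using a by simp
  define T where "T = \<Inter>{A0, {x\<in>S. mul x a = a}}"
  have "T \<in> \<A>"
    unfolding \<A>_def
  proof (intro CollectI conjI)
    show "cl T" unfolding T_def using cl_Inter[of "{A0, {x\<in>S. mul x a = a}}"] A0p(1) fib[OF aS] by blast
    obtain x where "x \<in> A0" "mul x a = a" using \<open>a \<in> Aa\<close> unfolding Aa_def by auto
    then have "x \<in> T" unfolding T_def using A0S by auto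
    then show "T \<noteq> {}" by blast
    show "\<forall>x\<in>T. \<forall>y\<in>T. mul x y \<in> T"
    proof (intro ballI)
      fix x y assume "x \<in> T" "y \<in> T"
      then have xy: "x \<in> A0" "y \<in> A0" "mul x a = a" "mul y a = a" unfolding T_def by auto
      have "mul (mul x y) a = a" using xy A0S aS assoc by (simp add: subset_iff)
      moreover have "mul x y \<in> A0" using xy A0p(3) by blast
      ultimately show "mul x y \<in> T" unfolding T_def using A0S by auto
    qed
  qed
  moreover have "T \<subseteq> A0" unfolding T_def by blast
  ultimately have "T = A0" using minimal by blast
  then have "mul a a = a" using a unfolding T_def by auto
  then show ?thesis using aS by blast
qed

locale ctx =
  fixes FZ :: "'f \<Rightarrow> 'a list \<Rightarrow> 'a" and RZ :: "'r \<Rightarrow> 'a list \<Rightarrow> bool"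
    and FN :: "'f \<Rightarrow> int list \<Rightarrow> int" and RN :: "'r \<Rightarrow> int list \<Rightarrow> bool"
    and plusS zeroS :: 'f and lessS :: 'r
    and j :: "int \<Rightarrow> 'a"
    and X :: "'x topology"
    and m r :: nat
    and D :: "'a list set"
    and CF :: "'a list \<Rightarrow> 'a list set"
    and Y :: "('x \<times> 'a list \<times> 'a list) set"
    and mul :: "'a list \<Rightarrow> ('x \<times> 'a list) \<Rightarrow> ('x \<times> 'a list) \<Rightarrow> ('x \<times> 'a list)"
  assumes std_plus: "\<forall>a b. FN plusS [a, b] = a + b"
    and std_zero: "FN zeroS [] = 0"
    and std_less: "\<forall>a b. RN lessS [a, b] \<longleftrightarrow> a < b"
    and elem: "elem_emb (FN, RN) (FZ, RZ) j"
    and sat: "saturated_for (FZ, RZ)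
               ((UNIV :: 'f set) <+> (UNIV :: 'r set) <+> (UNIV :: nat set)
                 <+> {R. openin X R \<and> closedin X R})"
    and prof: "profinite_space X"
    and D_dim: "D \<subseteq> {d. length d = m}"
    and D_def: "def0 (FZ, RZ) m D"
    and C_dim: "\<forall>d\<in>D. CF d \<subseteq> {c. length c = r}"
    and C_bdd: "\<forall>d\<in>D. bounded_in (FZ, RZ) plusS zeroS lessS r (CF d)"
    and C_def: "def0 (FZ, RZ) (r + m) {c @ d | c d. d \<in> D \<and> c \<in> CF d}"
    and Y_sub: "Y \<subseteq> {(x, c, d). x \<in> topspace X \<and> d \<in> D \<and> c \<in> CF d}"
    and Y_nonempty: "\<forall>d\<in>D. {(x, c). (x, c, d) \<in> Y} \<noteq> {}"
    and Y_closed: "\<forall>d\<in>D. \<forall>y\<in>{(x, c). (x, c, d) \<in> Y}. \<forall>y'\<in>{(x, c). (x, c, d) \<in> Y}.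
                     mul d y y' \<in> {(x, c). (x, c, d) \<in> Y}"
    and Y_assoc: "\<forall>d\<in>D. \<forall>y\<in>{(x, c). (x, c, d) \<in> Y}. \<forall>y'\<in>{(x, c). (x, c, d) \<in> Y}.
                     \<forall>y''\<in>{(x, c). (x, c, d) \<in> Y}. mul d (mul d y y') y'' = mul d y (mul d y' y'')"
    and Y_reldef: "\<exists>U0 F0. clopen_partition X U0
                     \<and> F0 \<subseteq> {(R, c, d). R \<in> U0 \<and> d \<in> D \<and> c \<in> CF d}
                     \<and> (\<forall>R\<in>U0. def0 (FZ, RZ) (r + m) {c @ d | c d. (R, c, d) \<in> F0})
                     \<and> Y = {(x, c, d). x \<in> topspace X \<and> d \<in> D \<and> c \<in> CF d \<and> (blk U0 x, c, d) \<in> F0}"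
    and prod_prodef: "\<forall>U. clopen_partition X U \<longrightarrow>
       (\<exists>V (mm :: ('x set \<times> 'a list \<times> 'a list) \<Rightarrow> ('x set \<times> 'a list \<times> 'a list)
                    \<Rightarrow> ('x set \<times> 'a list \<times> 'a list)).
          clopen_partition X V \<and> refines V U
        \<and> (\<forall>R\<in>V. \<forall>R'\<in>V. \<forall>d\<in>D. \<forall>c\<in>CF d. \<forall>c'\<in>CF d.
              (case mm (R, c, d) (R', c', d) of (S, c'', d'') \<Rightarrow> S \<in> U \<and> d'' \<in> D \<and> c'' \<in> CF d''))
        \<and> (\<forall>R\<in>V. \<forall>R'\<in>V. \<forall>S\<in>U. def0 (FZ, RZ) (r + r + m + r + m)
              {c @ c' @ d @ c'' @ d'' | c c' d c'' d''.
                 d \<in> D \<and> c \<in> CF d \<and> c' \<in> CF d \<and> mm (R, c, d) (R', c', d) = (S, c'', d'')})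
        \<and> (\<forall>d\<in>D. \<forall>x c x' c'. (x, c, d) \<in> Y \<and> (x', c', d) \<in> Y \<longrightarrow>
              (case mul d (x, c) (x', c') of (x'', c'') \<Rightarrow> (blk U x'', c'', d))
                = mm (blk V x, c, d) (blk V x', c', d)))"
begin

definition Yd :: "'a list \<Rightarrow> ('x \<times> 'a list) set" where
  "Yd d = {(x, c). (x, c, d) \<in> Y}"

definition PU0 where "PU0 U0 F0 \<longleftrightarrow> clopen_partition X U0
                     \<and> F0 \<subseteq> {(R, c, d). R \<in> U0 \<and> d \<in> D \<and> c \<in> CF d}
                     \<and> (\<forall>R\<in>U0. def0 (FZ, RZ) (r + m) {c @ d | c d. (R, c, d) \<in> F0})
                     \<and> Y = {(x, c, d). x \<in> topspace X \<and> d \<in> D \<and> c \<in> CF d \<and> (blk U0 x, c, d) \<in> F0}"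

definition U0 where "U0 = (SOME U0. \<exists>F0. PU0 U0 F0)"
definition F0 where "F0 = (SOME F0. PU0 U0 F0)"

lemma PU0: "PU0 U0 F0"
proof -
  have "\<exists>U0 F0. PU0 U0 F0" using Y_reldef unfolding PU0_def by blast
  then have "\<exists>F0. PU0 U0 F0" unfolding U0_def by (rule someI_ex)
  then show ?thesis unfolding F0_def by (rule someI_ex)
qed

lemma PU0_conj: "clopen_partition X U0 \<and> F0 \<subseteq> {(R, c, d). R \<in> U0 \<and> d \<in> D \<and> c \<in> CF d} \<and>
  (\<forall>R\<in>U0. def0 (FZ, RZ) (r + m) {c @ d | c d. (R, c, d) \<in> F0}) \<and>
  Y = {(x, c, d). x \<in> topspace X \<and> d \<in> D \<and> c \<in> CF d \<and> (blk U0 x, c, d) \<in> F0}"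
  using PU0 unfolding PU0_def .
lemmas PU0_parts = PU0_conj[THEN conjunct1] PU0_conj[THEN conjunct2, THEN conjunct1]
  PU0_conj[THEN conjunct2, THEN conjunct2, THEN conjunct1] PU0_conj[THEN conjunct2, THEN conjunct2, THEN conjunct2]
lemma U0_part: "clopen_partition X U0" by (rule PU0_parts(1))
lemma F0_sub: "F0 \<subseteq> {(R, c, d). R \<in> U0 \<and> d \<in> D \<and> c \<in> CF d}" by (rule PU0_parts(2))
lemma F0_def0: "R \<in> U0 \<Longrightarrow> def0 (FZ, RZ) (r + m) {c @ d | c d. (R, c, d) \<in> F0}"
  using PU0_parts(3) by (rule bspec)
lemma Y_eq: "Y = {(x, c, d). x \<in> topspace X \<and> d \<in> D \<and> c \<in> CF d \<and> (blk U0 x, c, d) \<in> F0}"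
  by (rule PU0_parts(4))

lemma Y_iff: "(x, c, d) \<in> Y \<longleftrightarrow> x \<in> topspace X \<and> d \<in> D \<and> c \<in> CF d \<and> (blk U0 x, c, d) \<in> F0"
  by (subst Y_eq) simp

definition PV where "PV U V mm \<longleftrightarrow> clopen_partition X V \<and> refines V U
        \<and> (\<forall>R\<in>V. \<forall>R'\<in>V. \<forall>d\<in>D. \<forall>c\<in>CF d. \<forall>c'\<in>CF d.
              (case mm (R, c, d) (R', c', d) of (S, c'', d'') \<Rightarrow> S \<in> U \<and> d'' \<in> D \<and> c'' \<in> CF d''))
        \<and> (\<forall>R\<in>V. \<forall>R'\<in>V. \<forall>S\<in>U. def0 (FZ, RZ) (r + r + m + r + m)
              {c @ c' @ d @ c'' @ d'' | c c' d c'' d''.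
                 d \<in> D \<and> c \<in> CF d \<and> c' \<in> CF d \<and> mm (R, c, d) (R', c', d) = (S, c'', d'')})
        \<and> (\<forall>d\<in>D. \<forall>x c x' c'. (x, c, d) \<in> Y \<and> (x', c', d) \<in> Y \<longrightarrow>
              (case mul d (x, c) (x', c') of (x'', c'') \<Rightarrow> (blk U x'', c'', d))
                = mm (blk V x, c, d) (blk V x', c', d))"

definition Vf where "Vf U = (SOME V. \<exists>mm. PV U V mm)"
definition mmf where "mmf U = (SOME mm. PV U (Vf U) mm)"

lemma PV: "clopen_partition X U \<Longrightarrow> PV U (Vf U) (mmf U)"
proof -
  assume "clopen_partition X U"
  then have "\<exists>V mm. PV U V mm" using prod_prodef unfolding PV_def by blast
  then have "\<exists>mm. PV U (Vf U) mm" unfolding Vf_def by (rule someI_ex)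
  then show ?thesis unfolding mmf_def by (rule someI_ex)
qed

lemma PV_conj:
  assumes "clopen_partition X U"
  shows "clopen_partition X (Vf U) \<and> refines (Vf U) U \<and>
   (\<forall>R\<in>Vf U. \<forall>R'\<in>Vf U. \<forall>d\<in>D. \<forall>c\<in>CF d. \<forall>c'\<in>CF d.
              (case mmf U (R, c, d) (R', c', d) of (S, c'', d'') \<Rightarrow> S \<in> U \<and> d'' \<in> D \<and> c'' \<in> CF d'')) \<and>
   (\<forall>R\<in>Vf U. \<forall>R'\<in>Vf U. \<forall>S\<in>U. def0 (FZ, RZ) (r + r + m + r + m)
              {c @ c' @ d @ c'' @ d'' | c c' d c'' d''.
                 d \<in> D \<and> c \<in> CF d \<and> c' \<in> CF d \<and> mmf U (R, c, d) (R', c', d) = (S, c'', d'')}) \<and>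
   (\<forall>d\<in>D. \<forall>x c x' c'. (x, c, d) \<in> Y \<and> (x', c', d) \<in> Y \<longrightarrow>
              (case mul d (x, c) (x', c') of (x'', c'') \<Rightarrow> (blk U x'', c'', d))
                = mmf U (blk (Vf U) x, c, d) (blk (Vf U) x', c', d))"
  using PV[OF assms] unfolding PV_def .

lemmas PV_parts = PV_conj[THEN conjunct1] PV_conj[THEN conjunct2, THEN conjunct1]
  PV_conj[THEN conjunct2, THEN conjunct2, THEN conjunct1]
  PV_conj[THEN conjunct2, THEN conjunct2, THEN conjunct2, THEN conjunct1]
  PV_conj[THEN conjunct2, THEN conjunct2, THEN conjunct2, THEN conjunct2]

lemma Vf_part: "clopen_partition X U \<Longrightarrow> clopen_partition X (Vf U)"
  by (rule PV_parts(1))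
lemma Vf_ref: "clopen_partition X U \<Longrightarrow> refines (Vf U) U"
  by (rule PV_parts(2))
lemma mmf_range: "clopen_partition X U \<Longrightarrow> R \<in> Vf U \<Longrightarrow> R' \<in> Vf U \<Longrightarrow> d \<in> D \<Longrightarrow> c \<in> CF d \<Longrightarrow> c' \<in> CF d \<Longrightarrow>
   (case mmf U (R, c, d) (R', c', d) of (S, c'', d'') \<Rightarrow> S \<in> U \<and> d'' \<in> D \<and> c'' \<in> CF d'')"
  by (rule PV_parts(3)[rule_format])
lemma mmf_def0: "clopen_partition X U \<Longrightarrow> R \<in> Vf U \<Longrightarrow> R' \<in> Vf U \<Longrightarrow> S \<in> U \<Longrightarrow>
   def0 (FZ, RZ) (r + r + m + r + m)
              {c @ c' @ d @ c'' @ d'' | c c' d c'' d''.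
                 d \<in> D \<and> c \<in> CF d \<and> c' \<in> CF d \<and> mmf U (R, c, d) (R', c', d) = (S, c'', d'')}"
  by (rule PV_parts(4)[rule_format])
lemma mmf_mul: "clopen_partition X U \<Longrightarrow> d \<in> D \<Longrightarrow> (x, c, d) \<in> Y \<Longrightarrow> (x', c', d) \<in> Y \<Longrightarrow>
   (case mul d (x, c) (x', c') of (x'', c'') \<Rightarrow> (blk U x'', c'', d))
                = mmf U (blk (Vf U) x, c, d) (blk (Vf U) x', c', d)"
  by (rule PV_parts(5)[rule_format]) (assumption | rule conjI)+

definition pi :: "'x set set \<Rightarrow> 'x \<times> 'a list \<Rightarrow> 'x set \<times> 'a list" where
  "pi U y = (blk U (fst y), snd y)"

lemma Yd_iff: "(x, c) \<in> Yd d \<longleftrightarrow> (x, c, d) \<in> Y" unfolding Yd_def by simp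

lemma Yd_top: "y \<in> Yd d \<Longrightarrow> fst y \<in> topspace X"
  unfolding Yd_def using Y_sub by auto

lemma Yd_closed: "d \<in> D \<Longrightarrow> y \<in> Yd d \<Longrightarrow> y' \<in> Yd d \<Longrightarrow> mul d y y' \<in> Yd d"
  unfolding Yd_def by (rule Y_closed[rule_format])

lemma Yd_assoc: "d \<in> D \<Longrightarrow> y \<in> Yd d \<Longrightarrow> y' \<in> Yd d \<Longrightarrow> y'' \<in> Yd d \<Longrightarrow>
    mul d (mul d y y') y'' = mul d y (mul d y' y'')"
  unfolding Yd_def by (rule Y_assoc[rule_format])

lemma pi_mul: "clopen_partition X U \<Longrightarrow> d \<in> D \<Longrightarrow> y \<in> Yd d \<Longrightarrow> y' \<in> Yd d \<Longrightarrow>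
    (pi U (mul d y y'), d) = (case mmf U (fst (pi (Vf U) y), snd y, d) (fst (pi (Vf U) y'), snd y', d) of (S, c, d') \<Rightarrow> ((S, c), d'))"
proof -
  assume U: "clopen_partition X U" and d: "d \<in> D" and y: "y \<in> Yd d" and y': "y' \<in> Yd d"
  obtain x c x' c' where yy: "y = (x, c)" "y' = (x', c')" by (cases y, cases y') auto
  obtain x'' c'' where m: "mul d (x, c) (x', c') = (x'', c'')" by (cases "mul d (x, c) (x', c')") auto
  have "(blk U x'', c'', d) = mmf U (blk (Vf U) x, c, d) (blk (Vf U) x', c', d)"
    using mmf_mul[OF U d, of x c x' c'] y y' yy m unfolding Yd_def by simp
  then show ?thesis using yy m unfolding pi_def
    by (cases "mmf U (blk (Vf U) x, c, d) (blk (Vf U) x', c', d)") auto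
qed

lemma pi_mul_left: "clopen_partition X U \<Longrightarrow> d \<in> D \<Longrightarrow> y1 \<in> Yd d \<Longrightarrow> y2 \<in> Yd d \<Longrightarrow> a \<in> Yd d \<Longrightarrow>
    pi (Vf U) y1 = pi (Vf U) y2 \<Longrightarrow> snd y1 = snd y2 \<Longrightarrow> pi U (mul d y1 a) = pi U (mul d y2 a)"
proof -
  assume U: "clopen_partition X U" and d: "d \<in> D" and y: "y1 \<in> Yd d" "y2 \<in> Yd d" "a \<in> Yd d"
    and e: "pi (Vf U) y1 = pi (Vf U) y2" "snd y1 = snd y2"
  have "(pi U (mul d y1 a), d) = (pi U (mul d y2 a), d)"
    unfolding pi_mul[OF U d y(1,3)] pi_mul[OF U d y(2,3)] using e by simp
  then show ?thesis by simp
qed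

lemma pi_eq_snd: "pi U y = pi U y' \<Longrightarrow> snd y = snd y'" unfolding pi_def by simp

lemma pi_refine: "clopen_partition X W \<Longrightarrow> clopen_partition X U \<Longrightarrow> refines W U \<Longrightarrow>
   fst y \<in> topspace X \<Longrightarrow> fst y' \<in> topspace X \<Longrightarrow> pi W y = pi W y' \<Longrightarrow> pi U y = pi U y'"
  unfolding pi_def using blk_refine_eq by (metis prod.inject)

lemma sepS:
  assumes "y1 \<in> Yd d" "y2 \<in> Yd d" "y1 \<noteq> y2"
  shows "\<exists>U. clopen_partition X U \<and> pi U y1 \<noteq> pi U y2"
proof (cases "snd y1 = snd y2")
  case False
  then show ?thesis using U0_part unfolding pi_def by auto
next
  case True
  then have "fst y1 \<noteq> fst y2" using assms(3) by (simp add: prod_eq_iff)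
  then obtain U where "clopen_partition X U" "blk U (fst y1) \<noteq> blk U (fst y2)"
    using profinite_separate[OF prof Yd_top[OF assms(1)] Yd_top[OF assms(2)]] by blast
  then show ?thesis unfolding pi_def by auto
qed

end

lemma part_parts:
  assumes "clopen_partition X U"
  shows "finite U" "\<And>R. R \<in> U \<Longrightarrow> openin X R" "\<And>R. R \<in> U \<Longrightarrow> closedin X R" "\<And>R. R \<in> U \<Longrightarrow> R \<noteq> {}"
    "\<Union>U = topspace X"
  using assms unfolding clopen_partition_def by simp_all

lemma blk_sub_top: "clopen_partition X U \<Longrightarrow> R \<in> U \<Longrightarrow> R \<subseteq> topspace X"
  using part_parts(5) Union_upper by metis

lemma blk_open: "clopen_partition X U \<Longrightarrow> x \<in> topspace X \<Longrightarrow> openin X (blk U x)"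
  using blk_mem(1) part_parts(2) by metis

context ctx begin

definition clY :: "'a list \<Rightarrow> ('x \<times> 'a list) set \<Rightarrow> bool" where
  "clY d K \<longleftrightarrow> K \<subseteq> Yd d \<and> (\<forall>y\<in>Yd d - K. \<exists>U. clopen_partition X U \<and> (\<forall>y'\<in>K. pi U y' \<noteq> pi U y))"

lemma Kc_closed:
  assumes d: "d \<in> D" and K: "clY d K"
  shows "closedin X {x. (x, c) \<in> K}"
proof -
  define Kc where "Kc = {x. (x, c) \<in> K}"
  have KY: "K \<subseteq> Yd d" using K unfolding clY_def by blast
  have Kc_top: "Kc \<subseteq> topspace X"
  proof
    fix x assume "x \<in> Kc"
    then have "(x, c) \<in> Yd d" using KY unfolding Kc_def by blast
    then show "x \<in> topspace X" using Yd_top by fastforce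
  qed
  have "openin X (topspace X - Kc)"
  proof (subst openin_subopen, intro ballI)
    fix x assume x: "x \<in> topspace X - Kc"
    show "\<exists>T. openin X T \<and> x \<in> T \<and> T \<subseteq> topspace X - Kc"
    proof (cases "(x, c) \<in> Yd d")
      case True
      then have "(x, c) \<in> Yd d - K" using x unfolding Kc_def by blast
      then obtain U where U: "clopen_partition X U" "\<forall>y'\<in>K. pi U y' \<noteq> pi U (x, c)"
        using K unfolding clY_def by blast
      have xt: "x \<in> topspace X" using x by blast
      have "blk U x \<subseteq> topspace X - Kc"
      proof
        fix x' assume x': "x' \<in> blk U x"
        have "x' \<in> topspace X" using x' blk_sub_top[OF U(1) blk_mem(1)[OF U(1) xt]] by blast
        moreover have "x' \<notin> Kc"
        proof
          assume "x' \<in> Kc"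
          then have "(x', c) \<in> K" unfolding Kc_def by simp
          moreover have "blk U x' = blk U x" using blk_eq[OF U(1) blk_mem(1)[OF U(1) xt] x'] .
          ultimately show False using U(2) unfolding pi_def by auto
        qed
        ultimately show "x' \<in> topspace X - Kc" by blast
      qed
      then show ?thesis using blk_open[OF U(1) xt] blk_mem(2)[OF U(1) xt] by blast
    next
      case False
      have xt: "x \<in> topspace X" using x by blast
      have "blk U0 x \<subseteq> topspace X - Kc"
      proof
        fix x' assume x': "x' \<in> blk U0 x"
        have "x' \<in> topspace X" using x' blk_sub_top[OF U0_part blk_mem(1)[OF U0_part xt]] by blast
        moreover have "x' \<notin> Kc"
        proof
          assume "x' \<in> Kc"
          then have "(x', c) \<in> Yd d" using KY unfolding Kc_def by blast
          then have "d \<in> D \<and> c \<in> CF d \<and> (blk U0 x', c, d) \<in> F0" unfolding Yd_iff Y_iff by blast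
          moreover have "blk U0 x' = blk U0 x" using blk_eq[OF U0_part blk_mem(1)[OF U0_part xt] x'] .
          ultimately have "(x, c, d) \<in> Y" unfolding Y_iff using xt by simp
          then show False using False unfolding Yd_iff by simp
        qed
        ultimately show "x' \<in> topspace X - Kc" by blast
      qed
      then show ?thesis using blk_open[OF U0_part xt] blk_mem(2)[OF U0_part xt] by blast
    qed
  qed
  then show ?thesis using Kc_top unfolding closedin_def Kc_def by blast
qed

lemma cover:
  assumes d: "d \<in> D" and fin: "finite (CF d)" and K: "clY d K"
    and Uf: "\<forall>y\<in>K. clopen_partition X (Uf y)"
  shows "\<exists>F. finite F \<and> F \<subseteq> K \<and> (\<forall>y'\<in>K. \<exists>y\<in>F. pi (Uf y) y' = pi (Uf y) y)"
proof -
  have KY: "K \<subseteq> Yd d" using K unfolding clY_def by blast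
  have cs: "compact_space X" using prof unfolding profinite_space_def by blast
  have ex: "\<forall>c\<in>CF d. \<exists>C. C \<subseteq> {x. (x, c) \<in> K} \<and> finite C \<and>
          {x. (x, c) \<in> K} \<subseteq> \<Union>((\<lambda>x. blk (Uf (x, c)) x) ` C)"
  proof
    fix c assume "c \<in> CF d"
    define Kc where "Kc = {x. (x, c) \<in> K}"
    define f where "f x = blk (Uf (x, c)) x" for x
    have top: "x \<in> topspace X" if "x \<in> Kc" for x
      using that KY Yd_top unfolding Kc_def by fastforce
    have comp: "compactin X Kc" unfolding Kc_def by (rule closedin_compact_space[OF cs Kc_closed[OF d K]])
    have op: "\<forall>T\<in>f ` Kc. openin X T"
    proof
      fix T assume "T \<in> f ` Kc"
      then obtain x where "x \<in> Kc" "T = f x" by blast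
      then have "(x, c) \<in> K" "T = blk (Uf (x, c)) x" unfolding Kc_def f_def by simp_all
      then show "openin X T" using blk_open[of X "Uf (x, c)" x] Uf top[of x] unfolding Kc_def by simp
    qed
    have cov: "Kc \<subseteq> \<Union>(f ` Kc)"
    proof
      fix x assume x: "x \<in> Kc"
      have "clopen_partition X (Uf (x, c))" using Uf x unfolding Kc_def by blast
      then have "x \<in> f x" unfolding f_def by (rule blk_mem(2)[OF _ top[OF x]])
      then show "x \<in> \<Union>(f ` Kc)" using x by blast
    qed
    obtain \<F> where \<F>: "finite \<F>" "\<F> \<subseteq> f ` Kc" "Kc \<subseteq> \<Union>\<F>"
      using comp op cov unfolding compactin_def by meson
    obtain C where C: "C \<subseteq> Kc" "finite C" "\<F> = f ` C"
      using finite_subset_image[OF \<F>(1,2)] by blast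
    show "\<exists>C. C \<subseteq> {x. (x, c) \<in> K} \<and> finite C \<and> {x. (x, c) \<in> K} \<subseteq> \<Union>((\<lambda>x. blk (Uf (x, c)) x) ` C)"
      using C \<F>(3) unfolding Kc_def f_def by blast
  qed
  obtain Cf where Cf: "\<forall>c\<in>CF d. Cf c \<subseteq> {x. (x, c) \<in> K} \<and> finite (Cf c) \<and>
          {x. (x, c) \<in> K} \<subseteq> \<Union>((\<lambda>x. blk (Uf (x, c)) x) ` Cf c)"
    using bchoice[OF ex] by (elim exE) (rule that, assumption)
  define F where "F = (\<Union>c\<in>CF d. (\<lambda>x. (x, c)) ` Cf c)"
  have "finite F" unfolding F_def using fin Cf by blast
  moreover have "F \<subseteq> K" unfolding F_def using Cf by blast
  moreover have "\<forall>y'\<in>K. \<exists>y\<in>F. pi (Uf y) y' = pi (Uf y) y"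
  proof
    fix y' assume y': "y' \<in> K"
    obtain x' c' where xc: "y' = (x', c')" by (cases y') auto
    have "(x', c', d) \<in> Y" using y' xc KY unfolding Yd_def by blast
    then have c': "c' \<in> CF d" unfolding Y_iff by blast
    have "x' \<in> {x. (x, c') \<in> K}" using y' xc by simp
    then obtain x where x: "x \<in> Cf c'" "x' \<in> blk (Uf (x, c')) x" using Cf c' by blast
    have xK: "(x, c') \<in> K" using x(1) Cf c' by blast
    then have U: "clopen_partition X (Uf (x, c'))" using Uf by blast
    have xt: "x \<in> topspace X" using xK KY Yd_top by fastforce
    have "blk (Uf (x, c')) x' = blk (Uf (x, c')) x"
      by (rule blk_eq[OF U blk_mem(1)[OF U xt] x(2)])
    then have "pi (Uf (x, c')) y' = pi (Uf (x, c')) (x, c')" unfolding pi_def xc by simp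
    moreover have "(x, c') \<in> F" unfolding F_def using x(1) c' by blast
    ultimately show "\<exists>y\<in>F. pi (Uf y) y' = pi (Uf y) y" by blast
  qed
  ultimately show ?thesis by blast
qed

end

context ctx begin

lemma clY_Yd: "clY d (Yd d)" unfolding clY_def by simp

lemma clY_sub: "clY d K \<Longrightarrow> K \<subseteq> Yd d" unfolding clY_def by simp

lemma clY_Inter:
  assumes ne: "\<K> \<noteq> {}" and cl: "\<forall>K\<in>\<K>. clY d K"
  shows "clY d (\<Inter>\<K>)"
  unfolding clY_def
proof (intro conjI ballI)
  obtain K0 where K0: "K0 \<in> \<K>" using ne by blast
  have "\<Inter>\<K> \<subseteq> K0" using K0 by (rule Inter_lower)
  also have "K0 \<subseteq> Yd d" using cl K0 clY_sub by blast
  finally show "\<Inter>\<K> \<subseteq> Yd d" .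
next
  fix y assume y: "y \<in> Yd d - \<Inter>\<K>"
  then obtain K where K: "K \<in> \<K>" "y \<notin> K" by blast
  then have "y \<in> Yd d - K" using y by blast
  then obtain U where U: "clopen_partition X U" "\<forall>y'\<in>K. pi U y' \<noteq> pi U y"
    using cl K(1) unfolding clY_def by blast
  have "\<forall>y'\<in>\<Inter>\<K>. pi U y' \<noteq> pi U y"
  proof
    fix y' assume "y' \<in> \<Inter>\<K>"
    then have "y' \<in> K" using K(1) by blast
    then show "pi U y' \<noteq> pi U y" using U(2) by blast
  qed
  then show "\<exists>U. clopen_partition X U \<and> (\<forall>y'\<in>\<Inter>\<K>. pi U y' \<noteq> pi U y)" using U(1) by blast
qed

lemma clY_compact:
  assumes d: "d \<in> D" and fin: "finite (CF d)" and cl: "\<forall>K\<in>\<K>. clY d K"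
    and fip: "\<forall>F. finite F \<and> F \<subseteq> \<K> \<longrightarrow> \<Inter>F \<inter> Yd d \<noteq> {}"
  shows "\<Inter>\<K> \<inter> Yd d \<noteq> {}"
proof
  assume empty: "\<Inter>\<K> \<inter> Yd d = {}"
  have ex: "\<forall>y\<in>Yd d. \<exists>p. fst p \<in> \<K> \<and> y \<notin> fst p \<and> clopen_partition X (snd p) \<and> (\<forall>y'\<in>fst p. pi (snd p) y' \<noteq> pi (snd p) y)"
  proof
    fix y assume y: "y \<in> Yd d"
    then have "y \<notin> \<Inter>\<K>" using empty by blast
    then obtain K where K: "K \<in> \<K>" "y \<notin> K" by blast
    then have "y \<in> Yd d - K" using y by blast
    then obtain U where U: "clopen_partition X U" "\<forall>y'\<in>K. pi U y' \<noteq> pi U y"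
      using cl K(1) unfolding clY_def by blast
    show "\<exists>p. fst p \<in> \<K> \<and> y \<notin> fst p \<and> clopen_partition X (snd p) \<and> (\<forall>y'\<in>fst p. pi (snd p) y' \<noteq> pi (snd p) y)"
      by (rule exI[of _ "(K, U)"]) (use K U in simp)
  qed
  obtain pf where pf: "\<forall>y\<in>Yd d. fst (pf y) \<in> \<K> \<and> y \<notin> fst (pf y) \<and> clopen_partition X (snd (pf y)) \<and>
      (\<forall>y'\<in>fst (pf y). pi (snd (pf y)) y' \<noteq> pi (snd (pf y)) y)"
    using bchoice[OF ex] by (elim exE) (rule that, assumption)
  have Uf: "\<forall>y\<in>Yd d. clopen_partition X (snd (pf y))" using pf by blast
  obtain F where F: "finite F" "F \<subseteq> Yd d" "\<forall>y'\<in>Yd d. \<exists>y\<in>F. pi (snd (pf y)) y' = pi (snd (pf y)) y"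
    using cover[OF d fin clY_Yd Uf] by blast
  have "finite ((\<lambda>y. fst (pf y)) ` F)" using F(1) by simp
  moreover have "(\<lambda>y. fst (pf y)) ` F \<subseteq> \<K>" using F(2) pf by blast
  ultimately have "\<Inter>((\<lambda>y. fst (pf y)) ` F) \<inter> Yd d \<noteq> {}" using fip by blast
  then obtain z where z: "z \<in> Yd d" "\<forall>y\<in>F. z \<in> fst (pf y)" by blast
  obtain y where y: "y \<in> F" "pi (snd (pf y)) z = pi (snd (pf y)) y" using F(3) z(1) by blast
  have "y \<in> Yd d" using y(1) F(2) by blast
  then have "\<forall>y'\<in>fst (pf y). pi (snd (pf y)) y' \<noteq> pi (snd (pf y)) y" using pf by blast
  moreover have "z \<in> fst (pf y)" using z(2) y(1) by blast
  ultimately show False using y(2) by blast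
qed

lemma clY_transl:
  assumes d: "d \<in> D" and fin: "finite (CF d)" and K: "clY d K" and a: "a \<in> Yd d"
  shows "clY d ((\<lambda>k. mul d k a) ` K)"
  unfolding clY_def
proof (intro conjI ballI)
  have KY: "K \<subseteq> Yd d" using K by (rule clY_sub)
  show "(\<lambda>k. mul d k a) ` K \<subseteq> Yd d"
  proof
    fix z assume "z \<in> (\<lambda>k. mul d k a) ` K"
    then obtain k where "k \<in> K" "z = mul d k a" by blast
    then show "z \<in> Yd d" using Yd_closed[OF d _ a] KY by blast
  qed
  fix y assume y: "y \<in> Yd d - (\<lambda>k. mul d k a) ` K"
  have ex: "\<forall>k\<in>K. \<exists>U. clopen_partition X U \<and> pi U (mul d k a) \<noteq> pi U y"
  proof
    fix k assume k: "k \<in> K"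
    have "mul d k a \<in> Yd d" using Yd_closed[OF d _ a] KY k by blast
    moreover have "mul d k a \<noteq> y" using y k by blast
    ultimately show "\<exists>U. clopen_partition X U \<and> pi U (mul d k a) \<noteq> pi U y"
      using sepS y by blast
  qed
  obtain Uk where Uk: "\<forall>k\<in>K. clopen_partition X (Uk k) \<and> pi (Uk k) (mul d k a) \<noteq> pi (Uk k) y"
    using bchoice[OF ex] by (elim exE) (rule that, assumption)
  have Vk: "\<forall>k\<in>K. clopen_partition X (Vf (Uk k))" using Uk Vf_part by blast
  obtain F where F: "finite F" "F \<subseteq> K" "\<forall>k'\<in>K. \<exists>k\<in>F. pi (Vf (Uk k)) k' = pi (Vf (Uk k)) k"
    using cover[OF d fin K Vk] by blast
  have top: "topspace X \<noteq> {}" using Yd_top y by blast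
  obtain W where W: "clopen_partition X W" "\<forall>U\<in>Uk ` F. refines W U"
    using common_refinement[of "Uk ` F" X] F(1,2) Uk top by blast
  have "\<forall>z\<in>(\<lambda>k. mul d k a) ` K. pi W z \<noteq> pi W y"
  proof
    fix z assume "z \<in> (\<lambda>k. mul d k a) ` K"
    then obtain k' where k': "k' \<in> K" "z = mul d k' a" by blast
    obtain k where k: "k \<in> F" "pi (Vf (Uk k)) k' = pi (Vf (Uk k)) k" using F(3) k'(1) by blast
    have kK: "k \<in> K" using k(1) F(2) by blast
    have U: "clopen_partition X (Uk k)" using Uk kK by blast
    have k'Y: "k' \<in> Yd d" "k \<in> Yd d" using KY k'(1) kK by blast+
    have eq: "pi (Uk k) (mul d k' a) = pi (Uk k) (mul d k a)"
      by (rule pi_mul_left[OF U d k'Y a k(2) pi_eq_snd[OF k(2)]])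
    show "pi W z \<noteq> pi W y"
    proof
      assume "pi W z = pi W y"
      moreover have "refines W (Uk k)" using W(2) k(1) by blast
      moreover have "z \<in> Yd d" using k' Yd_closed[OF d k'Y(1) a] by simp
      ultimately have "pi (Uk k) z = pi (Uk k) y"
        using pi_refine[OF W(1) U] Yd_top y by blast
      then show False using eq k' Uk kK by simp
    qed
  qed
  then show "\<exists>U. clopen_partition X U \<and> (\<forall>y'\<in>(\<lambda>k. mul d k a) ` K. pi U y' \<noteq> pi U y)"
    using W(1) by blast
qed

lemma clY_fib:
  assumes d: "d \<in> D" and a: "a \<in> Yd d"
  shows "clY d {x\<in>Yd d. mul d x a = a}"
  unfolding clY_def
proof (intro conjI ballI)
  show "{x\<in>Yd d. mul d x a = a} \<subseteq> Yd d" by blast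
  fix y assume y: "y \<in> Yd d - {x\<in>Yd d. mul d x a = a}"
  then have yY: "y \<in> Yd d" and ne: "mul d y a \<noteq> a" by auto
  obtain U where U: "clopen_partition X U" "pi U (mul d y a) \<noteq> pi U a"
    using sepS[OF Yd_closed[OF d yY a] a ne] by blast
  have "\<forall>y'\<in>{x\<in>Yd d. mul d x a = a}. pi (Vf U) y' \<noteq> pi (Vf U) y"
  proof
    fix y' assume y': "y' \<in> {x\<in>Yd d. mul d x a = a}"
    show "pi (Vf U) y' \<noteq> pi (Vf U) y"
    proof
      assume e: "pi (Vf U) y' = pi (Vf U) y"
      have "y' \<in> Yd d" "mul d y' a = a" using y' by auto
      then have "pi U a = pi U (mul d y a)"
        using pi_mul_left[OF U(1) d _ yY a e pi_eq_snd[OF e]] by simp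
      then show False using U(2) by simp
    qed
  qed
  then show "\<exists>U. clopen_partition X U \<and> (\<forall>y'\<in>{x\<in>Yd d. mul d x a = a}. pi U y' \<noteq> pi U y)"
    using Vf_part[OF U(1)] by blast
qed

lemma idem_finite:
  assumes d: "d \<in> D" and fin: "finite (CF d)"
  shows "\<exists>e\<in>Yd d. mul d e e = e"
proof (rule ellis[where S = "Yd d" and cl = "clY d" and mul = "mul d"])
  show "Yd d \<noteq> {}" using Y_nonempty d unfolding Yd_def by blast
  show "clY d (Yd d)" by (rule clY_Yd)
  show "\<And>K. clY d K \<Longrightarrow> K \<subseteq> Yd d" by (rule clY_sub)
  show "\<And>\<K>. \<K> \<noteq> {} \<Longrightarrow> \<forall>K\<in>\<K>. clY d K \<Longrightarrow> clY d (\<Inter> \<K>)" by (rule clY_Inter)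
  show "\<And>\<K>. \<forall>K\<in>\<K>. clY d K \<Longrightarrow> \<forall>F. finite F \<and> F \<subseteq> \<K> \<longrightarrow> \<Inter> F \<inter> Yd d \<noteq> {} \<Longrightarrow> \<Inter> \<K> \<inter> Yd d \<noteq> {}"
    by (rule clY_compact[OF d fin])
  show "\<And>x y. x \<in> Yd d \<Longrightarrow> y \<in> Yd d \<Longrightarrow> mul d x y \<in> Yd d" by (rule Yd_closed[OF d])
  show "\<And>x y z. x \<in> Yd d \<Longrightarrow> y \<in> Yd d \<Longrightarrow> z \<in> Yd d \<Longrightarrow> mul d (mul d x y) z = mul d x (mul d y z)"
    by (rule Yd_assoc[OF d])
  show "\<And>K a. clY d K \<Longrightarrow> a \<in> Yd d \<Longrightarrow> clY d ((\<lambda>k. mul d k a) ` K)" by (rule clY_transl[OF d fin])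
  show "\<And>a. a \<in> Yd d \<Longrightarrow> clY d {x \<in> Yd d. mul d x a = a}" by (rule clY_fib[OF d])
qed

end

context ctx begin

lemma elem_sat: "sat (FN, RN) \<phi> t = sat (FZ, RZ) \<phi> (j \<circ> t)"
  using elem unfolding elem_emb_def by blast

lemma negZ_ex: "\<exists>e. FZ plusS [e, c] = FZ zeroS []"
proof -
  define \<Theta> :: "('f, 'r) fm" where "\<Theta> = Alls [0] (Ex 1 (Eq (Fn plusS [Var 1, Var 0]) (Fn zeroS [])))"
  have "sat (FN, RN) \<Theta> (\<lambda>_. 0)"
    unfolding \<Theta>_def sat_Alls
  proof (intro allI impI)
    fix t' :: "nat \<Rightarrow> int"
    show "sat (FN, RN) (Ex 1 (Eq (Fn plusS [Var 1, Var 0]) (Fn zeroS []))) t'"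
      using std_plus std_zero by (simp add: exI[of _ "- t' 0"])
  qed
  then have "sat (FZ, RZ) \<Theta> (j \<circ> (\<lambda>_. 0))" using elem_sat by blast
  then have H: "\<forall>s'. (\<forall>i. i \<notin> set [0] \<longrightarrow> s' i = (j \<circ> (\<lambda>_. 0)) i) \<longrightarrow>
     sat (FZ, RZ) (Ex 1 (Eq (Fn plusS [Var 1, Var 0]) (Fn zeroS []))) s'"
    unfolding \<Theta>_def sat_Alls .
  have "sat (FZ, RZ) (Ex 1 (Eq (Fn plusS [Var 1, Var 0]) (Fn zeroS []))) ((j \<circ> (\<lambda>_. 0))(0 := c))"
    by (rule H[rule_format]) simp
  then show ?thesis by simp
qed

lemma negZ_uniq:
  assumes "FZ plusS [e1, c] = FZ zeroS []" "FZ plusS [e2, c] = FZ zeroS []"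
  shows "e1 = e2"
proof -
  define \<Theta> :: "('f, 'r) fm" where "\<Theta> = Alls [0, 1, 2]
     (Imp (Conj (Eq (Fn plusS [Var 1, Var 0]) (Fn zeroS [])) (Eq (Fn plusS [Var 2, Var 0]) (Fn zeroS [])))
          (Eq (Var 1) (Var 2)))"
  have "sat (FN, RN) \<Theta> (\<lambda>_. 0)"
    unfolding \<Theta>_def sat_Alls using std_plus std_zero by simp
  then have "sat (FZ, RZ) \<Theta> (j \<circ> (\<lambda>_. 0))" using elem_sat by blast
  then have H: "\<forall>s'. (\<forall>i. i \<notin> set [0, 1, 2] \<longrightarrow> s' i = (j \<circ> (\<lambda>_. 0)) i) \<longrightarrow>
     sat (FZ, RZ) (Imp (Conj (Eq (Fn plusS [Var 1, Var 0]) (Fn zeroS [])) (Eq (Fn plusS [Var 2, Var 0]) (Fn zeroS [])))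
          (Eq (Var 1) (Var 2))) s'"
    unfolding \<Theta>_def sat_Alls .
  have "sat (FZ, RZ) (Imp (Conj (Eq (Fn plusS [Var 1, Var 0]) (Fn zeroS [])) (Eq (Fn plusS [Var 2, Var 0]) (Fn zeroS [])))
          (Eq (Var 1) (Var 2))) ((j \<circ> (\<lambda>_. 0))(0 := c, 1 := e1, 2 := e2))"
    by (rule H[rule_format]) simp
  then show ?thesis using assms by simp
qed

definition Cset where "Cset = {c @ d | c d. d \<in> D \<and> c \<in> CF d}"

definition CDf :: "('f, 'r) fm" where "CDf = fm_of (FZ, RZ) Cset ([0..<r] @ [r..<r+m])"

lemma sat_CDf: "sat (FZ, RZ) CDf t \<longleftrightarrow> map t [0..<r] @ map t [r..<r+m] \<in> Cset"
proof -
  have "def0 (FZ, RZ) (length ([0..<r] @ [r..<r+m])) Cset" using C_def unfolding Cset_def by simp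
  then show ?thesis unfolding CDf_def using sat_fm_of by fastforce
qed

lemma Cset_mem: "c @ d \<in> Cset \<Longrightarrow> length c = r \<Longrightarrow> d \<in> D \<and> c \<in> CF d"
proof -
  assume "c @ d \<in> Cset" "length c = r"
  then obtain c' d' where e: "c @ d = c' @ d'" "d' \<in> D" "c' \<in> CF d'" unfolding Cset_def by blast
  have "length c' = r" using C_dim e(2,3) by blast
  then have "c = c' \<and> d = d'" using e(1) \<open>length c = r\<close> by simp
  then show ?thesis using e by simp
qed

lemma Cset_memI: "d \<in> D \<Longrightarrow> c \<in> CF d \<Longrightarrow> c @ d \<in> Cset"
  unfolding Cset_def by blast

definition LEf :: "nat \<Rightarrow> nat \<Rightarrow> ('f, 'r) fm" where
  "LEf a b = Or (Rel lessS [Var a, Var b]) (Eq (Var a) (Var b))"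

definition ThB :: "('f, 'r) fm" where
  "ThB = Exs [r + m, r + m + 1] (Conj (Eq (Fn plusS [Var (r + m + 1), Var (r + m)]) (Fn zeroS []))
     (Alls [0..<r] (Imp CDf (Conjs (map (\<lambda>i. Conj (LEf (r + m + 1) i) (LEf i (r + m))) [0..<r])))))"

lemma ThB_Z:
  assumes d: "map t [r..<r+m] \<in> D"
  shows "sat (FZ, RZ) ThB t"
proof -
  define d0 where "d0 = map t [r..<r+m]"
  have "bounded_in (FZ, RZ) plusS zeroS lessS r (CF d0)" using C_bdd d unfolding d0_def by blast
  then obtain c where c: "\<forall>xs\<in>CF d0. length xs = r \<and> (\<forall>i<r.
      (RZ lessS [THE e. FZ plusS [e, c] = FZ zeroS [], xs ! i] \<or> (THE e. FZ plusS [e, c] = FZ zeroS []) = xs ! i)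
      \<and> (RZ lessS [xs ! i, c] \<or> xs ! i = c))"
    unfolding bounded_in_def Let_def by auto
  define e where "e = (THE e. FZ plusS [e, c] = FZ zeroS [])"
  have e: "FZ plusS [e, c] = FZ zeroS []"
  proof -
    obtain e' where e': "FZ plusS [e', c] = FZ zeroS []" using negZ_ex by blast
    have "e = e'" unfolding e_def
      by (rule the_equality[of "\<lambda>e. FZ plusS [e, c] = FZ zeroS []" e', OF e']) (use e' negZ_uniq in blast)
    then show ?thesis using e' by simp
  qed
  define t' where "t' = t(r + m := c, r + m + 1 := e)"
  have ag: "\<forall>i. i \<notin> set [r + m, r + m + 1] \<longrightarrow> t' i = t i" unfolding t'_def by simp
  have 1: "sat (FZ, RZ) (Eq (Fn plusS [Var (r + m + 1), Var (r + m)]) (Fn zeroS [])) t'"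
    unfolding t'_def using e by simp
  have 2: "sat (FZ, RZ) (Alls [0..<r] (Imp CDf (Conjs (map (\<lambda>i. Conj (LEf (r + m + 1) i) (LEf i (r + m))) [0..<r])))) t'"
    unfolding sat_Alls
  proof (intro allI impI)
    fix t'' assume ag2: "\<forall>i. i \<notin> set [0..<r] \<longrightarrow> t'' i = t' i"
    show "sat (FZ, RZ) (Imp CDf (Conjs (map (\<lambda>i. Conj (LEf (r + m + 1) i) (LEf i (r + m))) [0..<r]))) t''"
    proof (simp only: sat_Imp, intro impI)
      assume "sat (FZ, RZ) CDf t''"
      then have "map t'' [0..<r] @ map t'' [r..<r+m] \<in> Cset" by (rule sat_CDf[THEN iffD1])
      moreover have "map t'' [r..<r+m] = d0" unfolding d0_def using ag2 unfolding t'_def by simp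
      ultimately have cin: "map t'' [0..<r] \<in> CF d0" using Cset_mem by fastforce
      have vals: "t'' (r + m) = c" "t'' (r + m + 1) = e" using ag2 unfolding t'_def by simp_all
      show "sat (FZ, RZ) (Conjs (map (\<lambda>i. Conj (LEf (r + m + 1) i) (LEf i (r + m))) [0..<r])) t''"
      proof (simp only: sat_Conjs, intro ballI)
        fix \<phi> assume "\<phi> \<in> set (map (\<lambda>i. Conj (LEf (r + m + 1) i) (LEf i (r + m))) [0..<r])"
        then obtain i where i: "i < r" "\<phi> = Conj (LEf (r + m + 1) i) (LEf i (r + m))" by auto
        have "map t'' [0..<r] ! i = t'' i" using i(1) by simp
        then show "sat (FZ, RZ) \<phi> t''"
          using c[rule_format, OF cin] i vals unfolding e_def[symmetric] LEf_def by auto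
      qed
    qed
  qed
  show ?thesis unfolding ThB_def sat_Exs using ag 1 2 by (intro exI[of _ t']) simp
qed

end

context ctx begin

lemma CDf_cong:
  assumes "\<forall>v<r + m. t v = t' v"
  shows "sat (FZ, RZ) CDf t = sat (FZ, RZ) CDf t'"
proof -
  have a: "map t [0..<r] = map t' [0..<r]" by (intro map_cong refl) (use assms in auto)
  have b: "map t [r..<r+m] = map t' [r..<r+m]" by (intro map_cong refl) (use assms in auto)
  show ?thesis unfolding sat_CDf a b ..
qed

lemma fin_std:
  assumes d0: "map j d0 \<in> D"
  shows "finite (CF (map j d0))"
proof -
  have len: "length d0 = m" using d0 D_dim by auto
  define t0 :: "nat \<Rightarrow> int" where "t0 v = (if r \<le> v \<and> v < r + m then d0 ! (v - r) else 0)" for v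
  have t0d: "map (j \<circ> t0) [r..<r+m] = map j d0"
    by (rule nth_equalityI) (simp_all add: len t0_def)
  have "sat (FZ, RZ) ThB (j \<circ> t0)" using ThB_Z d0 t0d by simp
  then have "sat (FN, RN) ThB t0" using elem_sat by blast
  then obtain t1 where t1: "\<forall>i. i \<notin> set [r + m, r + m + 1] \<longrightarrow> t1 i = t0 i"
    "sat (FN, RN) (Eq (Fn plusS [Var (r + m + 1), Var (r + m)]) (Fn zeroS [])) t1"
    "sat (FN, RN) (Alls [0..<r] (Imp CDf (Conjs (map (\<lambda>i. Conj (LEf (r + m + 1) i) (LEf i (r + m))) [0..<r])))) t1"
    unfolding ThB_def sat_Exs by auto
  define c0 where "c0 = t1 (r + m)"
  have e0: "t1 (r + m + 1) = - c0" using t1(2) std_plus std_zero unfolding c0_def by simp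
  have bnd: "- c0 \<le> t2 i \<and> t2 i \<le> c0"
    if "\<forall>v. v \<notin> set [0..<r] \<longrightarrow> t2 v = t1 v" "sat (FN, RN) CDf t2" "i < r" for t2 i
  proof -
    have "sat (FN, RN) (Conjs (map (\<lambda>i. Conj (LEf (r + m + 1) i) (LEf i (r + m))) [0..<r])) t2"
      using t1(3) that(1,2) unfolding sat_Alls by auto
    then have "sat (FN, RN) (Conj (LEf (r + m + 1) i) (LEf i (r + m))) t2"
      using that(3) by auto
    moreover have "t2 (r + m + 1) = - c0" "t2 (r + m) = c0" using that(1) e0 unfolding c0_def by auto
    ultimately show ?thesis unfolding LEf_def using std_less by auto
  qed
  define N where "N = nat (2 * c0 + 1)"
  define b0 where "b0 = r + m + 2"
  define t3 :: "nat \<Rightarrow> int" where "t3 v = (if b0 \<le> v then - c0 + int (v - b0) else t1 v)" for v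
  define ThF :: "('f, 'r) fm" where "ThF = Alls [0..<r] (Imp CDf
     (Conjs (map (\<lambda>i. Disj (map (\<lambda>k. Eq (Var i) (Var (b0 + k))) [0..<N])) [0..<r])))"
  have "sat (FN, RN) ThF t3"
    unfolding ThF_def sat_Alls
  proof (intro allI impI)
    fix t2 assume ag: "\<forall>i. i \<notin> set [0..<r] \<longrightarrow> t2 i = t3 i"
    show "sat (FN, RN) (Imp CDf (Conjs (map (\<lambda>i. Disj (map (\<lambda>k. Eq (Var i) (Var (b0 + k))) [0..<N])) [0..<r]))) t2"
    proof (simp only: sat_Imp, intro impI)
      assume cd: "sat (FN, RN) CDf t2"
      define t2' where "t2' v = (if v < r then t2 v else t1 v)" for v
      have ag': "\<forall>v. v \<notin> set [0..<r] \<longrightarrow> t2' v = t1 v" unfolding t2'_def by simp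
      have "\<forall>v<r + m. (j \<circ> t2) v = (j \<circ> t2') v"
        using ag unfolding t2'_def t3_def b0_def by auto
      then have "sat (FN, RN) CDf t2'" using cd elem_sat CDf_cong by metis
      show "sat (FN, RN) (Conjs (map (\<lambda>i. Disj (map (\<lambda>k. Eq (Var i) (Var (b0 + k))) [0..<N])) [0..<r])) t2"
      proof (simp only: sat_Conjs, intro ballI)
        fix \<phi> :: "('f, 'r) fm" assume "\<phi> \<in> set (map (\<lambda>i. Disj (map (\<lambda>k. Eq (Var i) (Var (b0 + k))) [0..<N])) [0..<r])"
        then obtain i where i: "i < r" "\<phi> = Disj (map (\<lambda>k. Eq (Var i) (Var (b0 + k))) [0..<N])" by auto
        have b: "- c0 \<le> t2' i \<and> t2' i \<le> c0" by (rule bnd[OF ag' \<open>sat (FN, RN) CDf t2'\<close> i(1)])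
        then have b2: "- c0 \<le> t2 i \<and> t2 i \<le> c0" unfolding t2'_def using i(1) by simp
        define k where "k = nat (t2 i + c0)"
        have kN: "k < N" unfolding k_def N_def using b2 by auto
        have "t2 (b0 + k) = t3 (b0 + k)" using ag unfolding b0_def by simp
        also have "\<dots> = - c0 + int k" unfolding t3_def by simp
        also have "\<dots> = t2 i" unfolding k_def using b2 by simp
        finally have "sat (FN, RN) (Eq (Var i) (Var (b0 + k))) t2" by simp
        then show "sat (FN, RN) \<phi> t2" unfolding i(2) using kN by auto
      qed
    qed
  qed
  then have F: "sat (FZ, RZ) ThF (j \<circ> t3)" using elem_sat by blast
  have "CF (map j d0) \<subseteq> {xs. set xs \<subseteq> j ` {- c0..c0} \<and> length xs = r}"
  proof
    fix c assume c: "c \<in> CF (map j d0)"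
    have lc: "length c = r" using c C_dim d0 by blast
    define t4 where "t4 v = (if v < r then c ! v else j (t3 v))" for v
    have ag: "\<forall>v. v \<notin> set [0..<r] \<longrightarrow> t4 v = (j \<circ> t3) v" unfolding t4_def by simp
    have m1: "map t4 [0..<r] = c" by (rule nth_equalityI) (simp_all add: lc t4_def)
    have m2: "map t4 [r..<r+m] = map j d0"
    proof (rule nth_equalityI)
      show "length (map t4 [r..<r+m]) = length (map j d0)" using len by simp
      fix i assume "i < length (map t4 [r..<r+m])"
      then have i: "i < m" by simp
      have "t3 (r + i) = t1 (r + i)" unfolding t3_def b0_def using i by simp
      also have "\<dots> = t0 (r + i)" using t1(1) i by simp
      also have "\<dots> = d0 ! i" unfolding t0_def using i by simp
      finally show "map t4 [r..<r+m] ! i = map j d0 ! i" using i len unfolding t4_def by simp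
    qed
    have "sat (FZ, RZ) CDf t4" unfolding sat_CDf m1 m2 using Cset_memI d0 c by blast
    then have "sat (FZ, RZ) (Conjs (map (\<lambda>i. Disj (map (\<lambda>k. Eq (Var i) (Var (b0 + k))) [0..<N])) [0..<r])) t4"
      using F ag unfolding ThF_def sat_Alls by auto
    then have "\<forall>i\<in>{0..<r}. \<exists>k\<in>{0..<N}. t4 i = t4 (b0 + k)" by auto
    then have "\<forall>i<r. \<exists>k<N. t4 i = t4 (b0 + k)" by (metis atLeastLessThan_iff zero_le)
    then have "\<forall>i<r. c ! i \<in> j ` {- c0..c0}"
    proof (intro allI impI)
      fix i assume H: "\<forall>i<r. \<exists>k<N. t4 i = t4 (b0 + k)" and i: "i < r"
      then obtain k where k: "k < N" "t4 i = t4 (b0 + k)" by blast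
      have "t4 (b0 + k) = j (- c0 + int k)" unfolding t4_def t3_def b0_def by simp
      moreover have "- c0 + int k \<in> {- c0..c0}" using k(1) unfolding N_def by auto
      ultimately show "c ! i \<in> j ` {- c0..c0}" using k(2) i unfolding t4_def by simp
    qed
    then have "set c \<subseteq> j ` {- c0..c0}" using lc by (auto simp: in_set_conv_nth)
    then show "c \<in> {xs. set xs \<subseteq> j ` {- c0..c0} \<and> length xs = r}" using lc by simp
  qed
  moreover have "finite {xs. set xs \<subseteq> j ` {- c0..c0} \<and> length xs = r}"
    by (rule finite_lists_length_eq) simp
  ultimately show ?thesis by (rule finite_subset)
qed

end

context ctx begin

definition good :: "'x set set \<Rightarrow> bool" where
  "good U \<longleftrightarrow> clopen_partition X U \<and> refines U U0"

definition star :: "'x set set \<Rightarrow> 'a list \<Rightarrow> bool" where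
  "star U d \<longleftrightarrow> (\<exists>x c. (x, c, d) \<in> Y \<and> mmf U (blk (Vf U) x, c, d) (blk (Vf U) x, c, d) = (blk U x, c, d))"

lemma star_of_idem:
  assumes U: "clopen_partition X U" and d: "d \<in> D" and e: "e \<in> Yd d" "mul d e e = e"
  shows "star U d"
proof -
  obtain x c where xc: "e = (x, c)" by (cases e) auto
  have Y: "(x, c, d) \<in> Y" using e(1) xc unfolding Yd_def by simp
  have "(case mul d (x, c) (x, c) of (x'', c'') \<Rightarrow> (blk U x'', c'', d))
                = mmf U (blk (Vf U) x, c, d) (blk (Vf U) x, c, d)"
    by (rule mmf_mul[OF U d Y Y])
  then have "(blk U x, c, d) = mmf U (blk (Vf U) x, c, d) (blk (Vf U) x, c, d)"
    using e(2) xc by simp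
  then show ?thesis unfolding star_def using Y by metis
qed

definition rep :: "'x set \<Rightarrow> 'x" where "rep R = (SOME x. x \<in> R)"

lemma rep_in: "R \<noteq> {} \<Longrightarrow> rep R \<in> R"
  unfolding rep_def by (rule someI_ex) blast

lemma star_iff:
  assumes U: "good U" and d: "d \<in> D"
  shows "star U d \<longleftrightarrow> (\<exists>R\<in>Vf U. \<exists>c. (blk U0 (rep R), c, d) \<in> F0 \<and>
            mmf U (R, c, d) (R, c, d) = (blk U (rep R), c, d))"
proof -
  have Uc: "clopen_partition X U" and UU0: "refines U U0" using U unfolding good_def by simp_all
  have V: "clopen_partition X (Vf U)" using Vf_part[OF Uc] .
  have VU: "refines (Vf U) U" using Vf_ref[OF Uc] .
  have VU0: "refines (Vf U) U0" using refines_trans[OF VU UU0] .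
  have key: "blk U0 (rep R) = blk U0 x \<and> blk U (rep R) = blk U x \<and> blk (Vf U) x = R"
    if R: "R \<in> Vf U" and x: "x \<in> R" for R x
  proof -
    have Rne: "R \<noteq> {}" using x by blast
    have rR: "rep R \<in> R" using rep_in[OF Rne] .
    have xt: "x \<in> topspace X" using blk_sub_top[OF V R] x by blast
    have rt: "rep R \<in> topspace X" using blk_sub_top[OF V R] rR by blast
    have b1: "blk (Vf U) x = R" by (rule blk_eq[OF V R x])
    have b2: "blk (Vf U) (rep R) = R" by (rule blk_eq[OF V R rR])
    have "blk U0 (rep R) = blk U0 x" using blk_refine_eq[OF V U0_part VU0 rt xt] b1 b2 by simp
    moreover have "blk U (rep R) = blk U x" using blk_refine_eq[OF V Uc VU rt xt] b1 b2 by simp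
    ultimately show ?thesis using b1 by simp
  qed
  show ?thesis
  proof
    assume "star U d"
    then obtain x c where xc: "(x, c, d) \<in> Y" "mmf U (blk (Vf U) x, c, d) (blk (Vf U) x, c, d) = (blk U x, c, d)"
      unfolding star_def by blast
    have xt: "x \<in> topspace X" using xc(1) unfolding Y_iff by simp
    define R where "R = blk (Vf U) x"
    have R: "R \<in> Vf U" "x \<in> R" unfolding R_def using blk_mem[OF V xt] by simp_all
    have k: "blk U0 (rep R) = blk U0 x" "blk U (rep R) = blk U x" using key[OF R] by simp_all
    have "(blk U0 (rep R), c, d) \<in> F0" using xc(1) k unfolding Y_iff by simp
    moreover have "mmf U (R, c, d) (R, c, d) = (blk U (rep R), c, d)" using xc(2) k unfolding R_def by simp
    ultimately show "\<exists>R\<in>Vf U. \<exists>c. (blk U0 (rep R), c, d) \<in> F0 \<and> mmf U (R, c, d) (R, c, d) = (blk U (rep R), c, d)"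
      using R(1) by blast
  next
    assume "\<exists>R\<in>Vf U. \<exists>c. (blk U0 (rep R), c, d) \<in> F0 \<and> mmf U (R, c, d) (R, c, d) = (blk U (rep R), c, d)"
    then obtain R c where R: "R \<in> Vf U" "(blk U0 (rep R), c, d) \<in> F0" "mmf U (R, c, d) (R, c, d) = (blk U (rep R), c, d)"
      by blast
    have Rne: "R \<noteq> {}" using part_parts(4)[OF V R(1)] .
    define x where "x = rep R"
    have x: "x \<in> R" unfolding x_def by (rule rep_in[OF Rne])
    have xt: "x \<in> topspace X" using blk_sub_top[OF V R(1)] x by blast
    have k: "blk (Vf U) x = R" using key[OF R(1) x] by simp
    have cC: "c \<in> CF d" using R(2) F0_sub by blast
    have "(x, c, d) \<in> Y" unfolding Y_iff using xt d cC R(2) unfolding x_def by simp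
    moreover have "mmf U (blk (Vf U) x, c, d) (blk (Vf U) x, c, d) = (blk U x, c, d)"
      using R(3) k unfolding x_def by simp
    ultimately show "star U d" unfolding star_def by blast
  qed
qed

end

context ctx begin

definition F0set :: "'x set \<Rightarrow> 'a list set" where
  "F0set R0 = {c @ d | c d. (R0, c, d) \<in> F0}"

definition Gset :: "'x set set \<Rightarrow> 'x set \<Rightarrow> 'x set \<Rightarrow> 'a list set" where
  "Gset U R S = {c @ c' @ d @ c'' @ d'' | c c' d c'' d''.
                 d \<in> D \<and> c \<in> CF d \<and> c' \<in> CF d \<and> mmf U (R, c, d) (R, c', d) = (S, c'', d'')}"

lemma F0set_mem:
  assumes "length c = r" "c @ d \<in> F0set R0"
  shows "(R0, c, d) \<in> F0"
proof -
  obtain c1 d1 where e: "c @ d = c1 @ d1" "(R0, c1, d1) \<in> F0" using assms(2) unfolding F0set_def by blast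
  have "c1 \<in> CF d1" "d1 \<in> D" using e(2) F0_sub by blast+
  then have "length c1 = r" using C_dim by blast
  then have "c = c1 \<and> d = d1" using e(1) assms(1) by simp
  then show ?thesis using e(2) by simp
qed

lemma Gset_mem:
  assumes U: "clopen_partition X U" and R: "R \<in> Vf U" and lc: "length c = r" and ld: "length d = m"
    and mem: "c @ c @ d @ c @ d \<in> Gset U R S"
  shows "mmf U (R, c, d) (R, c, d) = (S, c, d)"
proof -
  obtain c1 c2 d1 c3 d2 where e: "c @ c @ d @ c @ d = c1 @ c2 @ d1 @ c3 @ d2" "d1 \<in> D" "c1 \<in> CF d1" "c2 \<in> CF d1"
    "mmf U (R, c1, d1) (R, c2, d1) = (S, c3, d2)"
    using mem unfolding Gset_def by blast
  have l1: "length c1 = r" "length c2 = r" using C_dim e(2,3,4) by blast+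
  have l2: "length d1 = m" using D_dim e(2) by blast
  have A: "c = c1 \<and> c @ d @ c @ d = c2 @ d1 @ c3 @ d2"
    using append_eq_append_conv[of c c1 "c @ d @ c @ d" "c2 @ d1 @ c3 @ d2"] e(1) by (metis lc l1(1))
  have B: "c = c2 \<and> d @ c @ d = d1 @ c3 @ d2"
    using append_eq_append_conv[of c c2 "d @ c @ d" "d1 @ c3 @ d2"] A by (metis lc l1(2))
  have C: "d = d1 \<and> c @ d = c3 @ d2"
    using append_eq_append_conv[of d d1 "c @ d" "c3 @ d2"] B by (metis ld l2)
  have "c = c1" using A by blast
  have "c = c2" using B by blast
  have "d = d1" using C by blast
  have "c @ d = c3 @ d2" using C by blast
  have "case mmf U (R, c1, d1) (R, c2, d1) of (S', c'', d'') \<Rightarrow> S' \<in> U \<and> d'' \<in> D \<and> c'' \<in> CF d''"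
    by (rule mmf_range[OF U R R e(2,3,4)])
  then have "c3 \<in> CF d2" "d2 \<in> D" using e(5) by simp_all
  then have "length c3 = r" using C_dim by blast
  then have "c = c3" "d = d2" using \<open>c @ d = c3 @ d2\<close> lc by simp_all
  then show ?thesis using e(5) \<open>c = c1\<close> \<open>c = c2\<close> \<open>d = d1\<close> by simp
qed

definition cv :: "nat list" where "cv = [0..<r]"
definition dv :: "nat list" where "dv = [r..<r+m]"

definition BodyF :: "'x set set \<Rightarrow> 'x set \<Rightarrow> ('f, 'r) fm" where
  "BodyF U R = Conj (fm_of (FZ, RZ) (F0set (blk U0 (rep R))) (cv @ dv))
                    (fm_of (FZ, RZ) (Gset U R (blk U (rep R))) (cv @ cv @ dv @ cv @ dv))"

definition PsiF :: "'x set set \<Rightarrow> 'x set \<Rightarrow> ('f, 'r) fm" where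
  "PsiF U R = Exs cv (BodyF U R)"

lemma body_iff:
  assumes U: "good U" and R: "R \<in> Vf U" and td: "map t dv = d" and d: "d \<in> D"
  shows "sat (FZ, RZ) (BodyF U R) t \<longleftrightarrow>
     (blk U0 (rep R), map t cv, d) \<in> F0 \<and> mmf U (R, map t cv, d) (R, map t cv, d) = (blk U (rep R), map t cv, d)"
proof -
  have Uc: "clopen_partition X U" using U unfolding good_def by simp
  have V: "clopen_partition X (Vf U)" using Vf_part[OF Uc] .
  have Rne: "R \<noteq> {}" using part_parts(4)[OF V R] .
  have rt: "rep R \<in> topspace X" using blk_sub_top[OF V R] rep_in[OF Rne] by blast
  have R0: "blk U0 (rep R) \<in> U0" using blk_mem(1)[OF U0_part rt] .
  have S: "blk U (rep R) \<in> U" using blk_mem(1)[OF Uc rt] .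
  have def1: "def0 (FZ, RZ) (length (cv @ dv)) (F0set (blk U0 (rep R)))"
    using F0_def0[OF R0] unfolding F0set_def cv_def dv_def by simp
  have l2: "length (cv @ cv @ dv @ cv @ dv) = r + r + m + r + m" unfolding cv_def dv_def by simp
  have def2: "def0 (FZ, RZ) (length (cv @ cv @ dv @ cv @ dv)) (Gset U R (blk U (rep R)))"
    unfolding l2 Gset_def by (rule mmf_def0[OF Uc R R S])
  have ld: "length d = m" using d D_dim by blast
  define c where "c = map t cv"
  have lc: "length c = r" unfolding c_def cv_def by simp
  have "sat (FZ, RZ) (BodyF U R) t \<longleftrightarrow> c @ d \<in> F0set (blk U0 (rep R)) \<and> c @ c @ d @ c @ d \<in> Gset U R (blk U (rep R))"
    unfolding BodyF_def using sat_fm_of[OF def1] sat_fm_of[OF def2] td unfolding c_def by simp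
  also have "\<dots> \<longleftrightarrow> (blk U0 (rep R), c, d) \<in> F0 \<and> mmf U (R, c, d) (R, c, d) = (blk U (rep R), c, d)"
  proof
    assume "c @ d \<in> F0set (blk U0 (rep R)) \<and> c @ c @ d @ c @ d \<in> Gset U R (blk U (rep R))"
    then show "(blk U0 (rep R), c, d) \<in> F0 \<and> mmf U (R, c, d) (R, c, d) = (blk U (rep R), c, d)"
      using F0set_mem[OF lc] Gset_mem[OF Uc R lc ld] by blast
  next
    assume c: "(blk U0 (rep R), c, d) \<in> F0 \<and> mmf U (R, c, d) (R, c, d) = (blk U (rep R), c, d)"
    have cC: "c \<in> CF d" using c F0_sub by blast
    show "c @ d \<in> F0set (blk U0 (rep R)) \<and> c @ c @ d @ c @ d \<in> Gset U R (blk U (rep R))"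
      using c d cC unfolding F0set_def Gset_def by blast
  qed
  finally show ?thesis unfolding c_def .
qed

lemma psi_iff:
  assumes U: "good U" and R: "R \<in> Vf U" and td: "map t dv = d" and d: "d \<in> D"
  shows "sat (FZ, RZ) (PsiF U R) t \<longleftrightarrow>
     (\<exists>c. (blk U0 (rep R), c, d) \<in> F0 \<and> mmf U (R, c, d) (R, c, d) = (blk U (rep R), c, d))"
proof
  assume "sat (FZ, RZ) (PsiF U R) t"
  then obtain t' where t': "\<forall>i. i \<notin> set cv \<longrightarrow> t' i = t i" "sat (FZ, RZ) (BodyF U R) t'"
    unfolding PsiF_def sat_Exs by blast
  have "map t' dv = map t dv" using t'(1) unfolding cv_def dv_def by simp
  then have dd: "map t' dv = d" using td by simp
  show "\<exists>c. (blk U0 (rep R), c, d) \<in> F0 \<and> mmf U (R, c, d) (R, c, d) = (blk U (rep R), c, d)"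
    using body_iff[OF U R dd d] t'(2) by blast
next
  assume "\<exists>c. (blk U0 (rep R), c, d) \<in> F0 \<and> mmf U (R, c, d) (R, c, d) = (blk U (rep R), c, d)"
  then obtain c where c: "(blk U0 (rep R), c, d) \<in> F0" "mmf U (R, c, d) (R, c, d) = (blk U (rep R), c, d)"
    by blast
  have cC: "c \<in> CF d" using c(1) F0_sub by blast
  have lc: "length c = r" using cC C_dim d by blast
  define t' where "t' v = (if v < r then c ! v else t v)" for v
  have ag: "\<forall>i. i \<notin> set cv \<longrightarrow> t' i = t i" unfolding t'_def cv_def by simp
  have mc: "map t' cv = c" unfolding cv_def by (rule nth_equalityI) (simp_all add: lc t'_def)
  have "map t' dv = map t dv" unfolding dv_def t'_def by (intro map_cong) auto
  then have md: "map t' dv = d" using td by simp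
  have "sat (FZ, RZ) (BodyF U R) t'" using body_iff[OF U R md d] c mc by simp
  then show "sat (FZ, RZ) (PsiF U R) t"
    unfolding PsiF_def sat_Exs using ag by blast
qed

definition Vl :: "'x set set \<Rightarrow> 'x set list" where "Vl U = (SOME l. set l = Vf U)"

lemma Vl: "clopen_partition X U \<Longrightarrow> set (Vl U) = Vf U"
  unfolding Vl_def by (rule someI_ex) (use finite_list part_parts(1)[OF Vf_part] in blast)

definition Dform :: "('f, 'r) fm" where "Dform = fm_of (FZ, RZ) D dv"

lemma sat_Dform: "sat (FZ, RZ) Dform t \<longleftrightarrow> map t dv \<in> D"
  unfolding Dform_def by (rule sat_fm_of) (use D_def in \<open>simp add: dv_def\<close>)

definition ThS :: "'x set set \<Rightarrow> ('f, 'r) fm" where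
  "ThS U = Alls dv (Imp Dform (Disj (map (PsiF U) (Vl U))))"

lemma transfer_star:
  assumes U: "good U" and std: "\<forall>d0. map j d0 \<in> D \<longrightarrow> star U (map j d0)" and d: "d \<in> D"
  shows "star U d"
proof -
  have Uc: "clopen_partition X U" using U unfolding good_def by simp
  have "sat (FN, RN) (ThS U) (\<lambda>_. 0)"
    unfolding ThS_def sat_Alls
  proof (intro allI impI)
    fix t' :: "nat \<Rightarrow> int"
    show "sat (FN, RN) (Imp Dform (Disj (map (PsiF U) (Vl U)))) t'"
    proof (simp only: sat_Imp, intro impI)
      assume "sat (FN, RN) Dform t'"
      then have "map (j \<circ> t') dv \<in> D" using elem_sat sat_Dform by blast
      then have dD: "map j (map t' dv) \<in> D" by simp
      then have "star U (map j (map t' dv))" using std by blast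
      then obtain R c where R: "R \<in> Vf U" "(blk U0 (rep R), c, map j (map t' dv)) \<in> F0"
        "mmf U (R, c, map j (map t' dv)) (R, c, map j (map t' dv)) = (blk U (rep R), c, map j (map t' dv))"
        using star_iff[OF U dD] by blast
      have "sat (FZ, RZ) (PsiF U R) (j \<circ> t')"
        using psi_iff[OF U R(1), of "j \<circ> t'" "map j (map t' dv)"] dD R(2,3) by auto
      then have "sat (FN, RN) (PsiF U R) t'" using elem_sat by blast
      moreover have "PsiF U R \<in> set (map (PsiF U) (Vl U))" using R(1) Vl[OF Uc] by simp
      ultimately show "sat (FN, RN) (Disj (map (PsiF U) (Vl U))) t'" by (simp only: sat_Disj) blast
    qed
  qed
  then have H: "sat (FZ, RZ) (ThS U) (j \<circ> (\<lambda>_. 0))" using elem_sat by blast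
  have ld: "length d = m" using d D_dim by blast
  define t' where "t' v = (if r \<le> v \<and> v < r + m then d ! (v - r) else j 0)" for v
  have ag: "\<forall>i. i \<notin> set dv \<longrightarrow> t' i = (j \<circ> (\<lambda>_. 0)) i" unfolding t'_def dv_def by simp
  have md: "map t' dv = d" unfolding dv_def by (rule nth_equalityI) (simp_all add: ld t'_def)
  have "sat (FZ, RZ) (Imp Dform (Disj (map (PsiF U) (Vl U)))) t'"
    using H ag unfolding ThS_def sat_Alls by blast
  moreover have "sat (FZ, RZ) Dform t'" using md d sat_Dform by simp
  ultimately have "sat (FZ, RZ) (Disj (map (PsiF U) (Vl U))) t'" by simp
  then obtain R where R: "R \<in> Vf U" "sat (FZ, RZ) (PsiF U R) t'" using Vl[OF Uc] by auto
  then have "\<exists>c. (blk U0 (rep R), c, d) \<in> F0 \<and> mmf U (R, c, d) (R, c, d) = (blk U (rep R), c, d)"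
    using psi_iff[OF U R(1) md d] by blast
  then show ?thesis using star_iff[OF U d] R(1) by blast
qed

lemma star_all:
  assumes U: "good U" and d: "d \<in> D"
  shows "star U d"
proof (rule transfer_star[OF U _ d], intro allI impI)
  fix d0 assume d0: "map j d0 \<in> D"
  have Uc: "clopen_partition X U" using U unfolding good_def by simp
  obtain e where "e \<in> Yd (map j d0)" "mul (map j d0) e e = e"
    using idem_finite[OF d0 fin_std[OF d0]] by blast
  then show "star U (map j d0)" using star_of_idem[OF Uc d0] by blast
qed

end

context ctx begin

definition cond :: "'a list \<Rightarrow> 'x set set \<Rightarrow> 'x \<Rightarrow> 'a list \<Rightarrow> bool" where
  "cond d U x c \<longleftrightarrow> (x, c, d) \<in> Y \<and> mmf U (blk (Vf U) x, c, d) (blk (Vf U) x, c, d) = (blk U x, c, d)"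

lemma good_U0: "good U0" unfolding good_def using U0_part refines_refl by blast

lemma cond_mul:
  assumes U: "clopen_partition X U" and d: "d \<in> D" and Y: "(x, c, d) \<in> Y"
  shows "cond d U x c \<longleftrightarrow> (case mul d (x, c) (x, c) of (x'', c'') \<Rightarrow> (blk U x'', c'', d)) = (blk U x, c, d)"
  unfolding cond_def using mmf_mul[OF U d Y Y] Y by simp

lemma cond_refine:
  assumes d: "d \<in> D" and W: "good W" and U: "good U" and WU: "refines W U" and c: "cond d W x c"
  shows "cond d U x c"
proof -
  have Wc: "clopen_partition X W" using W unfolding good_def by simp
  have Uc: "clopen_partition X U" using U unfolding good_def by simp
  have Y: "(x, c, d) \<in> Y" using c unfolding cond_def by simp
  obtain x'' c'' where m: "mul d (x, c) (x, c) = (x'', c'')" by (cases "mul d (x, c) (x, c)") auto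
  have "(blk W x'', c'', d) = (blk W x, c, d)" using cond_mul[OF Wc d Y] c m by simp
  then have e: "blk W x'' = blk W x" "c'' = c" by simp_all
  have "(x'', c'') \<in> Yd d" using Yd_closed[OF d, of "(x, c)" "(x, c)"] Y m unfolding Yd_def by simp
  then have x''t: "x'' \<in> topspace X" using Yd_top by fastforce
  have xt: "x \<in> topspace X" using Y unfolding Y_iff by simp
  have "blk U x'' = blk U x" using blk_refine_eq[OF Wc Uc WU x''t xt e(1)] .
  then show ?thesis using cond_mul[OF Uc d Y] m e(2) by simp
qed

lemma cond_blocks:
  assumes d: "d \<in> D" and U: "good U" and W: "clopen_partition X W"
    and r1: "refines W U" and r2: "refines W (Vf U)" and r3: "refines W U0"
    and xt: "x \<in> topspace X" and x't: "x' \<in> topspace X" and b: "blk W x = blk W x'"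
  shows "cond d U x c = cond d U x' c"
proof -
  have Uc: "clopen_partition X U" using U unfolding good_def by simp
  have b1: "blk U x = blk U x'" by (rule blk_refine_eq[OF W Uc r1 xt x't b])
  have b2: "blk (Vf U) x = blk (Vf U) x'" by (rule blk_refine_eq[OF W Vf_part[OF Uc] r2 xt x't b])
  have b3: "blk U0 x = blk U0 x'" by (rule blk_refine_eq[OF W U0_part r3 xt x't b])
  show ?thesis unfolding cond_def Y_iff using b1 b2 b3 xt x't by simp
qed

definition Kset :: "'a list \<Rightarrow> 'x set set set \<Rightarrow> 'x set" where
  "Kset d \<FF> = {x \<in> topspace X. \<exists>c. \<forall>U\<in>\<FF>. cond d U x c}"

lemma top_ne: "d \<in> D \<Longrightarrow> topspace X \<noteq> {}"
proof -
  assume d: "d \<in> D"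
  then obtain y where "y \<in> Yd d" using Y_nonempty unfolding Yd_def by blast
  then show "topspace X \<noteq> {}" using Yd_top by blast
qed

lemma Kset_ne:
  assumes d: "d \<in> D" and fin: "finite \<FF>" and g: "\<forall>U\<in>\<FF>. good U"
  shows "Kset d \<FF> \<noteq> {}"
proof -
  have "\<forall>U\<in>insert U0 \<FF>. clopen_partition X U" using g U0_part unfolding good_def by blast
  then obtain W where W: "clopen_partition X W" "\<forall>U\<in>insert U0 \<FF>. refines W U"
    using common_refinement[of "insert U0 \<FF>" X] fin top_ne[OF d] by blast
  have gW: "good W" unfolding good_def using W by blast
  have "star W d" by (rule star_all[OF gW d])
  then obtain x c where c: "cond d W x c" unfolding star_def cond_def by blast
  have xt: "x \<in> topspace X" using c unfolding cond_def Y_iff by simp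
  have "\<forall>U\<in>\<FF>. cond d U x c"
  proof
    fix U assume "U \<in> \<FF>"
    then show "cond d U x c" using cond_refine[OF d gW _ _ c] g W(2) by blast
  qed
  then have "x \<in> Kset d \<FF>" unfolding Kset_def using xt by blast
  then show ?thesis by blast
qed

lemma Kset_closed:
  assumes d: "d \<in> D" and fin: "finite \<FF>" and g: "\<forall>U\<in>\<FF>. good U"
  shows "closedin X (Kset d \<FF>)"
proof -
  have cp: "\<forall>U\<in>\<FF>. clopen_partition X U" using g unfolding good_def by blast
  have "\<forall>U\<in>insert U0 (\<FF> \<union> Vf ` \<FF>). clopen_partition X U" using cp U0_part Vf_part by blast
  moreover have "finite (insert U0 (\<FF> \<union> Vf ` \<FF>))" using fin by simp
  ultimately obtain W where W: "clopen_partition X W" "\<forall>U\<in>insert U0 (\<FF> \<union> Vf ` \<FF>). refines W U"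
    using common_refinement[of "insert U0 (\<FF> \<union> Vf ` \<FF>)" X] top_ne[OF d] by blast
  define \<R> where "\<R> = {R \<in> W. R \<inter> Kset d \<FF> \<noteq> {}}"
  have "Kset d \<FF> = \<Union>\<R>"
  proof
    show "Kset d \<FF> \<subseteq> \<Union>\<R>"
    proof
      fix x assume x: "x \<in> Kset d \<FF>"
      then have xt: "x \<in> topspace X" unfolding Kset_def by simp
      have "blk W x \<in> \<R>" unfolding \<R>_def using blk_mem[OF W(1) xt] x by blast
      then show "x \<in> \<Union>\<R>" using blk_mem(2)[OF W(1) xt] by blast
    qed
    show "\<Union>\<R> \<subseteq> Kset d \<FF>"
    proof
      fix x' assume "x' \<in> \<Union>\<R>"
      then obtain R x where R: "R \<in> W" "x' \<in> R" "x \<in> R" "x \<in> Kset d \<FF>" unfolding \<R>_def by blast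
      have x't: "x' \<in> topspace X" using blk_sub_top[OF W(1) R(1)] R(2) by blast
      have xt: "x \<in> topspace X" using blk_sub_top[OF W(1) R(1)] R(3) by blast
      have b: "blk W x = blk W x'" using blk_eq[OF W(1) R(1) R(2)] blk_eq[OF W(1) R(1) R(3)] by simp
      obtain c where c: "\<forall>U\<in>\<FF>. cond d U x c" using R(4) unfolding Kset_def by blast
      have "\<forall>U\<in>\<FF>. cond d U x' c"
      proof
        fix U assume U: "U \<in> \<FF>"
        have "refines W U" "refines W (Vf U)" "refines W U0" using W(2) U by blast+
        then have "cond d U x c = cond d U x' c"
          using cond_blocks[OF d _ W(1) _ _ _ xt x't b] g U by blast
        then show "cond d U x' c" using c U by blast
      qed
      then show "x' \<in> Kset d \<FF>" unfolding Kset_def using x't by blast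
    qed
  qed
  moreover have "closedin X (\<Union>\<R>)"
  proof (rule closedin_Union)
    show "finite \<R>" unfolding \<R>_def using part_parts(1)[OF W(1)] by simp
    show "\<And>T. T \<in> \<R> \<Longrightarrow> closedin X T" unfolding \<R>_def using part_parts(3)[OF W(1)] by blast
  qed
  ultimately show ?thesis by simp
qed

lemma x_star:
  assumes d: "d \<in> D"
  shows "\<exists>x\<in>topspace X. \<forall>\<FF>. finite \<FF> \<and> (\<forall>U\<in>\<FF>. good U) \<longrightarrow> x \<in> Kset d \<FF>"
proof -
  define \<U> where "\<U> = {Kset d \<FF> | \<FF>. finite \<FF> \<and> (\<forall>U\<in>\<FF>. good U)}"
  have cs: "compact_space X" using prof unfolding profinite_space_def by blast
  have cl: "\<forall>C\<in>\<U>. closedin X C" unfolding \<U>_def using Kset_closed[OF d] by blast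
  have fip: "\<forall>\<F>. finite \<F> \<and> \<F> \<subseteq> \<U> \<longrightarrow> \<Inter>\<F> \<noteq> {}"
  proof (intro allI impI)
    fix \<F> assume F: "finite \<F> \<and> \<F> \<subseteq> \<U>"
    have ex: "\<forall>C\<in>\<F>. \<exists>\<FF>. finite \<FF> \<and> (\<forall>U\<in>\<FF>. good U) \<and> C = Kset d \<FF>"
      using F unfolding \<U>_def by blast
    obtain ff where ff: "\<forall>C\<in>\<F>. finite (ff C) \<and> (\<forall>U\<in>ff C. good U) \<and> C = Kset d (ff C)"
      using bchoice[OF ex] by (elim exE) (rule that, assumption)
    define G where "G = \<Union>(ff ` \<F>)"
    have fG: "finite G" unfolding G_def using F ff by blast
    have gG: "\<forall>U\<in>G. good U" unfolding G_def using ff by blast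
    have "Kset d G \<subseteq> \<Inter>\<F>"
    proof
      fix x assume x: "x \<in> Kset d G"
      show "x \<in> \<Inter>\<F>"
      proof
        fix C assume C: "C \<in> \<F>"
        have "ff C \<subseteq> G" unfolding G_def using C by blast
        then have "x \<in> Kset d (ff C)" using x unfolding Kset_def by blast
        then show "x \<in> C" using ff C by blast
      qed
    qed
    then show "\<Inter>\<F> \<noteq> {}" using Kset_ne[OF d fG gG] by blast
  qed
  have "\<Inter>\<U> \<noteq> {}" using cs unfolding compact_space_fip using cl fip by blast
  then obtain x where x: "x \<in> \<Inter>\<U>" by blast
  have "Kset d {} \<in> \<U>" unfolding \<U>_def by blast
  then have xt: "x \<in> topspace X" using x unfolding Kset_def by blast
  have "\<forall>\<FF>. finite \<FF> \<and> (\<forall>U\<in>\<FF>. good U) \<longrightarrow> x \<in> Kset d \<FF>"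
    using x unfolding \<U>_def by blast
  then show ?thesis using xt by blast
qed

end

context ctx begin

lemma rep_key:
  assumes U: "good U" and R: "R \<in> Vf U" and x: "x \<in> R"
  shows "blk U0 (rep R) = blk U0 x \<and> blk U (rep R) = blk U x \<and> blk (Vf U) x = R"
proof -
  have Uc: "clopen_partition X U" and UU0: "refines U U0" using U unfolding good_def by simp_all
  have V: "clopen_partition X (Vf U)" using Vf_part[OF Uc] .
  have VU: "refines (Vf U) U" using Vf_ref[OF Uc] .
  have VU0: "refines (Vf U) U0" using refines_trans[OF VU UU0] .
  have Rne: "R \<noteq> {}" using x by blast
  have rR: "rep R \<in> R" using rep_in[OF Rne] .
  have xt: "x \<in> topspace X" using blk_sub_top[OF V R] x by blast
  have rt: "rep R \<in> topspace X" using blk_sub_top[OF V R] rR by blast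
  have b1: "blk (Vf U) x = R" by (rule blk_eq[OF V R x])
  have b2: "blk (Vf U) (rep R) = R" by (rule blk_eq[OF V R rR])
  have "blk U0 (rep R) = blk U0 x" using blk_refine_eq[OF V U0_part VU0 rt xt] b1 b2 by simp
  moreover have "blk U (rep R) = blk U x" using blk_refine_eq[OF V Uc VU rt xt] b1 b2 by simp
  ultimately show ?thesis using b1 by simp
qed

lemma body_cond:
  assumes U: "good U" and xt: "x \<in> topspace X" and td: "map t dv = d" and d: "d \<in> D"
  shows "sat (FZ, RZ) (BodyF U (blk (Vf U) x)) t \<longleftrightarrow> cond d U x (map t cv)"
proof -
  have Uc: "clopen_partition X U" using U unfolding good_def by simp
  have V: "clopen_partition X (Vf U)" using Vf_part[OF Uc] .
  define R where "R = blk (Vf U) x"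
  have R: "R \<in> Vf U" "x \<in> R" unfolding R_def using blk_mem[OF V xt] by simp_all
  have k: "blk U0 (rep R) = blk U0 x" "blk U (rep R) = blk U x" "blk (Vf U) x = R"
    using rep_key[OF U R] by simp_all
  have "sat (FZ, RZ) (BodyF U R) t \<longleftrightarrow>
     (blk U0 x, map t cv, d) \<in> F0 \<and> mmf U (R, map t cv, d) (R, map t cv, d) = (blk U x, map t cv, d)"
    using body_iff[OF U R(1) td d] k by simp
  also have "\<dots> \<longleftrightarrow> cond d U x (map t cv)"
  proof
    assume H: "(blk U0 x, map t cv, d) \<in> F0 \<and> mmf U (R, map t cv, d) (R, map t cv, d) = (blk U x, map t cv, d)"
    then have "map t cv \<in> CF d" using F0_sub by blast
    then show "cond d U x (map t cv)" unfolding cond_def Y_iff using H xt d k(3) by simp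
  next
    assume "cond d U x (map t cv)"
    then show "(blk U0 x, map t cv, d) \<in> F0 \<and> mmf U (R, map t cv, d) (R, map t cv, d) = (blk U x, map t cv, d)"
      unfolding cond_def Y_iff using k(3) by simp
  qed
  finally show ?thesis unfolding R_def .
qed

lemma injB: "\<forall>A::'a set. finite A \<longrightarrow> (\<exists>g. inj_on g A \<and> g ` A \<subseteq>
    ((UNIV :: 'f set) <+> (UNIV :: 'r set) <+> (UNIV :: nat set) <+> {R. openin X R \<and> closedin X R}))"
proof (intro allI impI)
  fix A :: "'a set" assume "finite A"
  then obtain f :: "'a \<Rightarrow> nat" and n where f: "inj_on f A" using finite_imp_inj_to_nat_seg by blast
  define g :: "'a \<Rightarrow> 'f + 'r + nat + 'x set" where "g a = Inr (Inr (Inl (f a)))" for a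
  have "inj_on g A" using f unfolding g_def inj_on_def by simp
  moreover have "g ` A \<subseteq> ((UNIV :: 'f set) <+> (UNIV :: 'r set) <+> (UNIV :: nat set) <+> {R. openin X R \<and> closedin X R})"
    unfolding g_def by auto
  ultimately show "\<exists>g. inj_on g A \<and> g ` A \<subseteq> ((UNIV :: 'f set) <+> (UNIV :: 'r set) <+> (UNIV :: nat set) <+> {R. openin X R \<and> closedin X R})"
    by blast
qed

lemma main_idem:
  assumes d: "d \<in> D"
  shows "\<exists>e\<in>Yd d. mul d e e = e"
proof -
  obtain xs where xt: "xs \<in> topspace X" and xK: "\<forall>\<FF>. finite \<FF> \<and> (\<forall>U\<in>\<FF>. good U) \<longrightarrow> xs \<in> Kset d \<FF>"
    using x_star[OF d] by blast
  have ld: "length d = m" using d D_dim by blast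
  define s0 where "s0 v = (if r \<le> v \<and> v < r + m then d ! (v - r) else j 0)" for v
  have s0d: "map s0 dv = d" unfolding dv_def by (rule nth_equalityI) (simp_all add: ld s0_def)
  have finr: "finite (range s0)"
  proof (rule finite_subset)
    show "range s0 \<subseteq> insert (j 0) (set d)" unfolding s0_def using ld by auto
  qed simp
  define \<Phi> where "\<Phi> = {BodyF U (blk (Vf U) xs) | U. good U}"
  have fs: "\<forall>F. finite F \<and> F \<subseteq> \<Phi> \<longrightarrow> (\<exists>t. (\<forall>i. i \<notin> set cv \<longrightarrow> t i = s0 i) \<and> (\<forall>\<phi>\<in>F. sat (FZ, RZ) \<phi> t))"
  proof (intro allI impI)
    fix F assume F: "finite F \<and> F \<subseteq> \<Phi>"
    have ex: "\<forall>\<phi>\<in>F. \<exists>U. good U \<and> \<phi> = BodyF U (blk (Vf U) xs)" using F unfolding \<Phi>_def by blast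
    obtain Uf where Uf: "\<forall>\<phi>\<in>F. good (Uf \<phi>) \<and> \<phi> = BodyF (Uf \<phi>) (blk (Vf (Uf \<phi>)) xs)"
      using bchoice[OF ex] by (elim exE) (rule that, assumption)
    have "finite (Uf ` F)" using F by simp
    moreover have "\<forall>U\<in>Uf ` F. good U" using Uf by blast
    ultimately have "xs \<in> Kset d (Uf ` F)" using xK by blast
    then obtain c where c: "\<forall>U\<in>Uf ` F. cond d U xs c" unfolding Kset_def by blast
    define t where "t v = (if v < r then c ! v else s0 v)" for v
    have ag: "\<forall>i. i \<notin> set cv \<longrightarrow> t i = s0 i" unfolding t_def cv_def by simp
    have "map t dv = map s0 dv" unfolding dv_def t_def by (intro map_cong) auto
    then have td: "map t dv = d" using s0d by simp
    have "\<forall>\<phi>\<in>F. sat (FZ, RZ) \<phi> t"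
    proof
      fix \<phi> assume \<phi>: "\<phi> \<in> F"
      have g: "good (Uf \<phi>)" using Uf \<phi> by blast
      have cc: "cond d (Uf \<phi>) xs c" using c \<phi> by blast
      then have "c \<in> CF d" unfolding cond_def Y_iff by simp
      then have lc: "length c = r" using C_dim d by blast
      have mc: "map t cv = c" unfolding cv_def by (rule nth_equalityI) (simp_all add: lc t_def)
      have "sat (FZ, RZ) (BodyF (Uf \<phi>) (blk (Vf (Uf \<phi>)) xs)) t"
        using body_cond[OF g xt td d] cc mc by simp
      then show "sat (FZ, RZ) \<phi> t" using Uf \<phi> by metis
    qed
    then show "\<exists>t. (\<forall>i. i \<notin> set cv \<longrightarrow> t i = s0 i) \<and> (\<forall>\<phi>\<in>F. sat (FZ, RZ) \<phi> t)" using ag by blast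
  qed
  obtain t where t: "\<forall>i. i \<notin> set cv \<longrightarrow> t i = s0 i" "\<forall>\<phi>\<in>\<Phi>. sat (FZ, RZ) \<phi> t"
    using realize[OF sat injB finr fs] by blast
  have "map t dv = map s0 dv" using t(1) unfolding cv_def dv_def by simp
  then have td: "map t dv = d" using s0d by simp
  define cs where "cs = map t cv"
  have condall: "cond d U xs cs" if U: "good U" for U
  proof -
    have "BodyF U (blk (Vf U) xs) \<in> \<Phi>" unfolding \<Phi>_def using U by blast
    then have "sat (FZ, RZ) (BodyF U (blk (Vf U) xs)) t" using t(2) by blast
    then show ?thesis using body_cond[OF U xt td d] unfolding cs_def by simp
  qed
  have Y: "(xs, cs, d) \<in> Y" using condall[OF good_U0] unfolding cond_def by simp
  obtain x'' c'' where mm: "mul d (xs, cs) (xs, cs) = (x'', c'')" by (cases "mul d (xs, cs) (xs, cs)") auto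
  have eqU: "blk U x'' = blk U xs \<and> c'' = cs" if U: "good U" for U
  proof -
    have Uc: "clopen_partition X U" using U unfolding good_def by simp
    show ?thesis using cond_mul[OF Uc d Y] condall[OF U] mm by simp
  qed
  have "(x'', c'') \<in> Yd d" using Yd_closed[OF d, of "(xs, cs)" "(xs, cs)"] Y mm unfolding Yd_def by simp
  then have x''t: "x'' \<in> topspace X" using Yd_top by fastforce
  have "x'' = xs"
  proof (rule ccontr)
    assume ne: "x'' \<noteq> xs"
    obtain U' where U': "clopen_partition X U'" "blk U' x'' \<noteq> blk U' xs"
      using profinite_separate[OF prof x''t xt ne] by blast
    define W where "W = meet U' U0"
    have W: "clopen_partition X W" "refines W U'" "refines W U0"
      unfolding W_def using meet_partition[OF U'(1) U0_part] by simp_all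
    have "good W" unfolding good_def using W by simp
    then have "blk W x'' = blk W xs" using eqU by blast
    then have "blk U' x'' = blk U' xs" using blk_refine_eq[OF W(1) U'(1) W(2) x''t xt] by simp
    then show False using U'(2) by simp
  qed
  moreover have "c'' = cs" using eqU[OF good_U0] by simp
  ultimately have "mul d (xs, cs) (xs, cs) = (xs, cs)" using mm by simp
  moreover have "(xs, cs) \<in> Yd d" using Y unfolding Yd_def by simp
  ultimately show ?thesis by blast
qed

end

theorem mainTheorem5:
  fixes FZ :: "'f \<Rightarrow> 'a list \<Rightarrow> 'a" and RZ :: "'r \<Rightarrow> 'a list \<Rightarrow> bool"
    and FN :: "'f \<Rightarrow> int list \<Rightarrow> int" and RN :: "'r \<Rightarrow> int list \<Rightarrow> bool"
    and plusS zeroS :: 'f and lessS :: 'r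
    and j :: "int \<Rightarrow> 'a"
    and X :: "'x topology"
    and m r :: nat
    and D :: "'a list set"
    and CF :: "'a list \<Rightarrow> 'a list set"
    and Y :: "('x \<times> 'a list \<times> 'a list) set"
    and mul :: "'a list \<Rightarrow> ('x \<times> 'a list) \<Rightarrow> ('x \<times> 'a list) \<Rightarrow> ('x \<times> 'a list)"
  assumes std_plus: "\<forall>a b. FN plusS [a, b] = a + b"
    and std_zero: "FN zeroS [] = 0"
    and std_less: "\<forall>a b. RN lessS [a, b] \<longleftrightarrow> a < b"
    and elem: "elem_emb (FN, RN) (FZ, RZ) j"
    and sat: "saturated_for (FZ, RZ)
               ((UNIV :: 'f set) <+> (UNIV :: 'r set) <+> (UNIV :: nat set)
                 <+> {R. openin X R \<and> closedin X R})"
    and prof: "profinite_space X"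
    and D_dim: "D \<subseteq> {d. length d = m}"
    and D_def: "def0 (FZ, RZ) m D"
    and C_dim: "\<forall>d\<in>D. CF d \<subseteq> {c. length c = r}"
    and C_bdd: "\<forall>d\<in>D. bounded_in (FZ, RZ) plusS zeroS lessS r (CF d)"
    and C_def: "def0 (FZ, RZ) (r + m) {c @ d | c d. d \<in> D \<and> c \<in> CF d}"
    and Y_sub: "Y \<subseteq> {(x, c, d). x \<in> topspace X \<and> d \<in> D \<and> c \<in> CF d}"
    and Y_nonempty: "\<forall>d\<in>D. {(x, c). (x, c, d) \<in> Y} \<noteq> {}"
    and Y_closed: "\<forall>d\<in>D. \<forall>y\<in>{(x, c). (x, c, d) \<in> Y}. \<forall>y'\<in>{(x, c). (x, c, d) \<in> Y}.
                     mul d y y' \<in> {(x, c). (x, c, d) \<in> Y}"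
    and Y_assoc: "\<forall>d\<in>D. \<forall>y\<in>{(x, c). (x, c, d) \<in> Y}. \<forall>y'\<in>{(x, c). (x, c, d) \<in> Y}.
                     \<forall>y''\<in>{(x, c). (x, c, d) \<in> Y}. mul d (mul d y y') y'' = mul d y (mul d y' y'')"
    and Y_reldef: "\<exists>U0 F0. clopen_partition X U0
                     \<and> F0 \<subseteq> {(R, c, d). R \<in> U0 \<and> d \<in> D \<and> c \<in> CF d}
                     \<and> (\<forall>R\<in>U0. def0 (FZ, RZ) (r + m) {c @ d | c d. (R, c, d) \<in> F0})
                     \<and> Y = {(x, c, d). x \<in> topspace X \<and> d \<in> D \<and> c \<in> CF d \<and> (blk U0 x, c, d) \<in> F0}"
    and prod_prodef: "\<forall>U. clopen_partition X U \<longrightarrow>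
       (\<exists>V (mm :: ('x set \<times> 'a list \<times> 'a list) \<Rightarrow> ('x set \<times> 'a list \<times> 'a list)
                    \<Rightarrow> ('x set \<times> 'a list \<times> 'a list)).
          clopen_partition X V \<and> refines V U
        \<and> (\<forall>R\<in>V. \<forall>R'\<in>V. \<forall>d\<in>D. \<forall>c\<in>CF d. \<forall>c'\<in>CF d.
              (case mm (R, c, d) (R', c', d) of (S, c'', d'') \<Rightarrow> S \<in> U \<and> d'' \<in> D \<and> c'' \<in> CF d''))
        \<and> (\<forall>R\<in>V. \<forall>R'\<in>V. \<forall>S\<in>U. def0 (FZ, RZ) (r + r + m + r + m)
              {c @ c' @ d @ c'' @ d'' | c c' d c'' d''.
                 d \<in> D \<and> c \<in> CF d \<and> c' \<in> CF d \<and> mm (R, c, d) (R', c', d) = (S, c'', d'')})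
        \<and> (\<forall>d\<in>D. \<forall>x c x' c'. (x, c, d) \<in> Y \<and> (x', c', d) \<in> Y \<longrightarrow>
              (case mul d (x, c) (x', c') of (x'', c'') \<Rightarrow> (blk U x'', c'', d))
                = mm (blk V x, c, d) (blk V x', c', d)))"
  shows "\<forall>d\<in>D. \<exists>e\<in>{(x, c). (x, c, d) \<in> Y}. mul d e e = e"
proof -
  interpret ctx FZ RZ FN RN plusS zeroS lessS j X m r D CF Y mul
    by (intro ctx.intro) (fact assms)+
  show ?thesis using main_idem unfolding Yd_def by blast
qed

end
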